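(* The set $\mathcal{L}_3$ of lines which meet $\mathcal{C}$ in exactly one point, are contained in an osculating plane of $\mathcal{C}$, and are not tangent lines of $\mathcal{C}$, is a single $G$-orbit, and every $\ell\in\mathcal{L}_3$ satisfies $OD_2(\ell)=OD_0(\ell)=[1,1,\tfrac{q-1}{2},\tfrac{q-1}{2},0]$.
   Context: Let $q$ be a power of a prime $p$, with $p\neq 2,3$. In $\mathrm{PG}(3,q)$ with coordinates $(Y_0,\dots,Y_3)$, the twisted cubic is $\mathcal{C}=\{P(t)=(1,t,t^2,t^3):t\in\mathbb{F}_q\}\cup\{P(\infty)=(0,0,0,1)\}$. $G\le \mathrm{PGL}(4,q)$ is the image of $\mathrm{PGL}(2,q)$ under the map sending the matrix $\begin{pmatrix}a&b\\c&d\end{pmatrix}$ to $\begin{pmatrix} a^3&a^2b&ab^2&b^3\\ 3a^2c&a^2d+2abc&b^2c+2abd&3b^2d\\ 3ac^2&bc^2+2acd&ad^2+2bcd&3bd^2\\ c^3&c^2d&cd^2&d^3\end{pmatrix}$. Osculating planes: $\Pi(t):-t^3Y_0+3t^2Y_1-3tY_2+Y_3=0$ ($t\in\mathbb{F}_q$), $\Pi(\infty):Y_0=0$. Tangent line at $P\in\mathcal{C}$: the line through $P$ meeting $\mathcal{C}$ with multiplicity two at $P$. Point classes: $\mathcal{P}_1$ = points of $\mathcal{C}$; $\mathcal{P}_2$ = points not on $\mathcal{C}$ on a tangent line; $\mathcal{P}_3$ = points not on $\mathcal{C}$ on exactly three osculating planes; $\mathcal{P}_4$ = points not on $\mathcal{C}$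 on exactly one osculating plane; $\mathcal{P}_5$ = points on no osculating plane. Plane classes: $\mathcal{H}_1$ = osculating planes; $\mathcal{H}_2$ = planes meeting $\mathcal{C}$ in exactly two points; $\mathcal{H}_3$ = exactly three points; $\mathcal{H}_4$ = non-osculating planes meeting $\mathcal{C}$ in exactly one point; $\mathcal{H}_5$ = planes disjoint from $\mathcal{C}$. $OD_0(\ell)$ (resp. $OD_2(\ell)$) is the list of the numbers of points of $\ell$ in $\mathcal{P}_1,\dots,\mathcal{P}_5$ (resp. planes through $\ell$ in $\mathcal{H}_1,\dots,\mathcal{H}_5$). *)

theory Defs
  imports Main
begin

section \<open>PG(3,q) over a finite field 'a, q = CARD('a)\<close>

type_synonym 'a vec4 = "'a \<times> 'a \<times> 'a \<times> 'a"

fun sm :: "'a::field \<Rightarrow> 'a vec4 \<Rightarrow> 'a vec4" where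
  "sm c (x0, x1, x2, x3) = (c * x0, c * x1, c * x2, c * x3)"

fun vadd :: "'a::field vec4 \<Rightarrow> 'a vec4 \<Rightarrow> 'a vec4" where
  "vadd (x0, x1, x2, x3) (y0, y1, y2, y3) = (x0 + y0, x1 + y1, x2 + y2, x3 + y3)"

fun dot :: "'a::field vec4 \<Rightarrow> 'a vec4 \<Rightarrow> 'a" where
  "dot (h0, h1, h2, h3) (x0, x1, x2, x3) = h0 * x0 + h1 * x1 + h2 * x2 + h3 * x3"

definition zero4 :: "'a::field vec4" where
  "zero4 = (0, 0, 0, 0)"

definition proj_pt :: "'a::field vec4 \<Rightarrow> 'a vec4 set" where
  "proj_pt v = {sm c v | c. c \<noteq> 0}"

definition points :: "'a::field vec4 set set" where
  "points = {proj_pt v | v. v \<noteq> zero4}"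

definition indep :: "'a::field vec4 \<Rightarrow> 'a vec4 \<Rightarrow> bool" where
  "indep u w = (\<forall>a b. vadd (sm a u) (sm b w) = zero4 \<longrightarrow> a = 0 \<and> b = 0)"

definition line_of :: "'a::field vec4 \<Rightarrow> 'a vec4 \<Rightarrow> 'a vec4 set set" where
  "line_of u w = {proj_pt (vadd (sm a u) (sm b w)) | a b. a \<noteq> 0 \<or> b \<noteq> 0}"

definition lines :: "'a::field vec4 set set set" where
  "lines = {line_of u w | u w. indep u w}"

definition plane_of :: "'a::field vec4 \<Rightarrow> 'a vec4 set set" where
  "plane_of h = {proj_pt v | v. v \<noteq> zero4 \<and> dot h v = 0}"

definition planes :: "'a::field vec4 set set set" where
  "planes = {plane_of h | h. h \<noteq> zero4}"

definition cubic_pt :: "'a::field \<Rightarrow> 'a vec4 set" where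
  "cubic_pt t = proj_pt (1, t, t^2, t^3)"

definition cubic_inf :: "'a::field vec4 set" where
  "cubic_inf = proj_pt (0, 0, 0, 1)"

definition TC :: "'a::field vec4 set set" where
  "TC = range cubic_pt \<union> {cubic_inf}"

definition osc_plane :: "'a::field \<Rightarrow> 'a vec4 set set" where
  "osc_plane t = plane_of (- (t^3), 3 * t^2, - 3 * t, 1)"

definition osc_inf :: "'a::field vec4 set set" where
  "osc_inf = plane_of (1, 0, 0, 0)"

definition Osc :: "'a::field vec4 set set set" where
  "Osc = range osc_plane \<union> {osc_inf}"

text \<open>Tangent line at P(t): spanned by P(t) and the derivative point (0,1,2t,3t^2);
  at P(infinity): spanned by (0,0,0,1) and (0,0,1,0).\<close>
definition Tan :: "'a::field vec4 set set set" where
  "Tan = range (\<lambda>t. line_of (1, t, t^2, t^3) (0, 1, 2 * t, 3 * t^2))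
         \<union> {line_of (0, 0, 0, 1) (0, 0, 1, 0)}"

section \<open>The group G (row-vector convention: Y \<mapsto> Y M)\<close>

fun gact :: "'a::field \<Rightarrow> 'a \<Rightarrow> 'a \<Rightarrow> 'a \<Rightarrow> 'a vec4 \<Rightarrow> 'a vec4" where
  "gact a b c d (y0, y1, y2, y3) =
    (y0 * a^3 + y1 * (3 * a^2 * c) + y2 * (3 * a * c^2) + y3 * c^3,
     y0 * (a^2 * b) + y1 * (a^2 * d + 2 * a * b * c) + y2 * (b * c^2 + 2 * a * c * d) + y3 * (c^2 * d),
     y0 * (a * b^2) + y1 * (b^2 * c + 2 * a * b * d) + y2 * (a * d^2 + 2 * b * c * d) + y3 * (c * d^2),
     y0 * b^3 + y1 * (3 * b^2 * d) + y2 * (3 * b * d^2) + y3 * d^3)"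

definition Gmaps :: "('a::field vec4 set \<Rightarrow> 'a vec4 set) set" where
  "Gmaps = {(\<lambda>P. gact a b c d ` P) | a b c d. a * d - b * c \<noteq> 0}"

definition P1 :: "'a::field vec4 set set" where "P1 = TC"
definition P2 :: "'a::field vec4 set set" where
  "P2 = {P \<in> points. P \<notin> TC \<and> (\<exists>l\<in>Tan. P \<in> l)}"
definition P3 :: "'a::field vec4 set set" where
  "P3 = {P \<in> points. P \<notin> TC \<and> card {\<pi> \<in> Osc. P \<in> \<pi>} = 3}"
definition P4 :: "'a::field vec4 set set" where
  "P4 = {P \<in> points. P \<notin> TC \<and> card {\<pi> \<in> Osc. P \<in> \<pi>} = 1}"
definition P5 :: "'a::field vec4 set set" where
  "P5 = {P \<in> points. \<forall>\<pi>\<in>Osc. P \<notin> \<pi>}"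

definition H1 :: "'a::field vec4 set set set" where "H1 = Osc"
definition H2 :: "'a::field vec4 set set set" where
  "H2 = {\<pi> \<in> planes. card (\<pi> \<inter> TC) = 2}"
definition H3 :: "'a::field vec4 set set set" where
  "H3 = {\<pi> \<in> planes. card (\<pi> \<inter> TC) = 3}"
definition H4 :: "'a::field vec4 set set set" where
  "H4 = {\<pi> \<in> planes. \<pi> \<notin> Osc \<and> card (\<pi> \<inter> TC) = 1}"
definition H5 :: "'a::field vec4 set set set" where
  "H5 = {\<pi> \<in> planes. \<pi> \<inter> TC = {}}"

definition OD0 :: "'a::field vec4 set set \<Rightarrow> nat list" where
  "OD0 l = map (\<lambda>K. card (l \<inter> K)) [P1, P2, P3, P4, P5]"

definition OD2 :: "'a::field vec4 set set \<Rightarrow> nat list" where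
  "OD2 l = map (\<lambda>K. card {\<pi> \<in> K. l \<subseteq> \<pi>}) [H1, H2, H3, H4, H5]"

definition L3 :: "'a::field vec4 set set set" where
  "L3 = {l \<in> lines. card (l \<inter> TC) = 1 \<and> (\<exists>\<pi>\<in>Osc. l \<subseteq> \<pi>) \<and> l \<notin> Tan}"

end

theory Submission
  imports Defs
begin

lemma sm_zero4[simp]: "sm 0 v = zero4" by (cases v) (simp add: zero4_def)
lemma sm_one[simp]: "sm 1 v = v" by (cases v) simp
lemma sm_sm[simp]: "sm a (sm b v) = sm (a*b) v" by (cases v) (simp add: mult.assoc)
lemma sm_eq_zero: "sm c v = zero4 \<longleftrightarrow> c = 0 \<or> v = zero4"
  by (cases v rule: prod_cases4) (auto simp: zero4_def)
lemma vadd_zero4[simp]: "vadd v zero4 = v" "vadd zero4 v = v"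
  by (cases v rule: prod_cases4, simp add: zero4_def)+
lemma dot_sm[simp]: "dot h (sm c v) = c * dot h v"
  by (cases v rule: prod_cases4; cases h rule: prod_cases4) (simp add: algebra_simps)
lemma dot_vadd[simp]: "dot h (vadd u v) = dot h u + dot h v"
  by (cases v rule: prod_cases4; cases u rule: prod_cases4; cases h rule: prod_cases4) (simp add: algebra_simps)
lemma sm_vadd: "sm c (vadd u v) = vadd (sm c u) (sm c v)"
  by (cases v rule: prod_cases4; cases u rule: prod_cases4) (simp add: algebra_simps)

lemma pp_sm: "c \<noteq> 0 \<Longrightarrow> proj_pt (sm c v) = proj_pt v"
  unfolding proj_pt_def
proof (intro set_eqI iffI)
  fix x assume c: "c \<noteq> 0"
  { assume "x \<in> {sm d (sm c v) |d. d \<noteq> 0}"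
    then obtain d where "d \<noteq> 0" "x = sm (d*c) v" by auto
    then show "x \<in> {sm d v |d. d \<noteq> 0}" using c by auto }
  { assume "x \<in> {sm d v |d. d \<noteq> 0}"
    then obtain d where d: "d \<noteq> 0" "x = sm d v" by auto
    then have "x = sm (d / c) (sm c v)" using c by simp
    then show "x \<in> {sm d (sm c v) |d. d \<noteq> 0}" using c d by fastforce }
qed

lemma pp_mem: "v \<in> proj_pt v"
  unfolding proj_pt_def by (rule CollectI, rule exI[of _ 1]) simp

lemma pp_eqD: "proj_pt v = proj_pt w \<Longrightarrow> \<exists>c. c \<noteq> 0 \<and> w = sm c v"
  using pp_mem[of w] unfolding proj_pt_def by auto

lemma pp_eq_iff: "proj_pt v = proj_pt w \<longleftrightarrow> (\<exists>c. c \<noteq> 0 \<and> w = sm c v)"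
  using pp_eqD pp_sm by metis

lemma mem_plane: "proj_pt v \<in> plane_of h \<longleftrightarrow> v \<noteq> zero4 \<and> dot h v = 0"
proof
  assume "proj_pt v \<in> plane_of h"
  then obtain v' where "proj_pt v = proj_pt v'" "v' \<noteq> zero4" "dot h v' = 0"
    unfolding plane_of_def by auto
  moreover then obtain c where "c \<noteq> 0" "v = sm c v'" using pp_eqD[of v' v] by metis
  ultimately show "v \<noteq> zero4 \<and> dot h v = 0"
    by (metis sm_eq_zero dot_sm mult_zero_right)
next
  assume "v \<noteq> zero4 \<and> dot h v = 0"
  then show "proj_pt v \<in> plane_of h" unfolding plane_of_def by blast
qed

lemma plane_elem: "P \<in> plane_of h \<Longrightarrow> \<exists>v. P = proj_pt v \<and> v \<noteq> zero4 \<and> dot h v = 0"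
  unfolding plane_of_def by auto

lemma line_elem: "P \<in> line_of u w \<Longrightarrow> \<exists>a b. (a \<noteq> 0 \<or> b \<noteq> 0) \<and> P = proj_pt (vadd (sm a u) (sm b w))"
  unfolding line_of_def by auto

lemma mem_lineI: "a \<noteq> 0 \<or> b \<noteq> 0 \<Longrightarrow> proj_pt (vadd (sm a u) (sm b w)) \<in> line_of u w"
  unfolding line_of_def by auto

lemma mem_lineD: "proj_pt x \<in> line_of u w \<Longrightarrow> \<exists>a b. x = vadd (sm a u) (sm b w)"
proof -
  assume "proj_pt x \<in> line_of u w"
  then obtain a b where "proj_pt x = proj_pt (vadd (sm a u) (sm b w))" by (auto dest: line_elem)
  then obtain c where "x = sm c (vadd (sm a u) (sm b w))" using pp_eqD by metis
  then have "x = vadd (sm (c*a) u) (sm (c*b) w)" by (simp add: sm_vadd)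
  then show ?thesis by blast
qed

lemma mem_lineI1: "proj_pt u \<in> line_of u w"
  using mem_lineI[of 1 0 u w] by simp
lemma mem_lineI2: "proj_pt w \<in> line_of u w"
  using mem_lineI[of 0 1 u w] by simp

lemma comb_eq: "vadd (sm a (vadd (sm \<alpha> u) (sm \<beta> w))) (sm b (vadd (sm \<gamma> u) (sm \<delta> w)))
   = vadd (sm (a*\<alpha>+b*\<gamma>) u) (sm (a*\<beta>+b*\<delta>) w)"
  by (cases w rule: prod_cases4; cases u rule: prod_cases4) (simp add: algebra_simps)

lemma span_change:
  fixes u w :: "'a::field vec4"
  assumes u': "u' = vadd (sm \<alpha> u) (sm \<beta> w)" and w': "w' = vadd (sm \<gamma> u) (sm \<delta> w)"
    and det: "\<alpha>*\<delta> - \<beta>*\<gamma> \<noteq> 0"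
  shows "line_of u' w' = line_of u w"
proof (intro set_eqI iffI)
  fix P assume "P \<in> line_of u' w'"
  then obtain a b where ab: "a \<noteq> 0 \<or> b \<noteq> 0" "P = proj_pt (vadd (sm a u') (sm b w'))"
    by (metis line_elem)
  have "a*\<alpha>+b*\<gamma> \<noteq> 0 \<or> a*\<beta>+b*\<delta> \<noteq> 0"
  proof (rule ccontr)
    assume "\<not> ?thesis"
    then have e: "a*\<alpha>+b*\<gamma> = 0" "a*\<beta>+b*\<delta> = 0" by auto
    have "a * (\<alpha>*\<delta> - \<beta>*\<gamma>) = 0" using e by algebra
    moreover have "b * (\<alpha>*\<delta> - \<beta>*\<gamma>) = 0" using e by algebra
    ultimately show False using ab det by auto
  qed
  then show "P \<in> line_of u w" using ab mem_lineI by (simp add: u' w' comb_eq)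
next
  fix P assume "P \<in> line_of u w"
  then obtain a' b' where ab: "a' \<noteq> 0 \<or> b' \<noteq> 0" "P = proj_pt (vadd (sm a' u) (sm b' w))"
    by (metis line_elem)
  define D where "D = \<alpha>*\<delta> - \<beta>*\<gamma>"
  define a where "a = (a'*\<delta> - b'*\<gamma>)/D"
  define b where "b = (b'*\<alpha> - a'*\<beta>)/D"
  have D: "D \<noteq> 0" using det D_def by simp
  have aD: "a * D = a'*\<delta> - b'*\<gamma>" using D unfolding a_def by simp
  have bD: "b * D = b'*\<alpha> - a'*\<beta>" using D unfolding b_def by simp
  have "(a*\<alpha>+b*\<gamma>) * D = a' * D" using aD bD unfolding D_def by algebra
  then have 1: "a*\<alpha>+b*\<gamma> = a'" using D by simp
  have "(a*\<beta>+b*\<delta>) * D = b' * D" using aD bD unfolding D_def by algebra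
  then have 2: "a*\<beta>+b*\<delta> = b'" using D by simp
  have "a \<noteq> 0 \<or> b \<noteq> 0" using 1 2 ab by auto
  then show "P \<in> line_of u' w'" using mem_lineI[of a b u' w'] ab by (simp add: u' w' comb_eq 1 2)
qed

lemma span_change_indep:
  fixes u w :: "'a::field vec4"
  assumes ind: "indep u w" and u': "u' = vadd (sm \<alpha> u) (sm \<beta> w)" and w': "w' = vadd (sm \<gamma> u) (sm \<delta> w)"
    and det: "\<alpha>*\<delta> - \<beta>*\<gamma> \<noteq> 0"
  shows "indep u' w'"
  unfolding indep_def
proof (intro allI impI)
  fix a b assume "vadd (sm a u') (sm b w') = zero4"
  then have "vadd (sm (a*\<alpha>+b*\<gamma>) u) (sm (a*\<beta>+b*\<delta>) w) = zero4" by (simp add: u' w' comb_eq)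
  then have e: "a*\<alpha>+b*\<gamma> = 0" "a*\<beta>+b*\<delta> = 0" using ind unfolding indep_def by blast+
  have "a * (\<alpha>*\<delta> - \<beta>*\<gamma>) = 0" using e by algebra
  moreover have "b * (\<alpha>*\<delta> - \<beta>*\<gamma>) = 0" using e by algebra
  ultimately show "a = 0 \<and> b = 0" using det by auto
qed

lemma vadd_neg: "vadd X (sm (-1) (X::'a::field vec4)) = zero4"
  by (cases X rule: prod_cases4) (simp add: zero4_def)

lemma line_param:
  assumes ind: "indep u w"
  shows "line_of u w = insert (proj_pt u) (range (\<lambda>l. proj_pt (vadd (sm l u) w)))"
proof (intro set_eqI iffI)
  fix P assume "P \<in> line_of u w"
  then obtain a b where ab: "a \<noteq> 0 \<or> b \<noteq> 0" "P = proj_pt (vadd (sm a u) (sm b w))"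
    by (metis line_elem)
  show "P \<in> insert (proj_pt u) (range (\<lambda>l. proj_pt (vadd (sm l u) w)))"
  proof (cases "b = 0")
    case True
    then have "P = proj_pt u" using ab pp_sm[of a u] by simp
    then show ?thesis by simp
  next
    case False
    have "vadd (sm a u) (sm b w) = sm b (vadd (sm (a/b) u) w)"
      using False by (cases w rule: prod_cases4; cases u rule: prod_cases4) (simp add: field_simps)
    then have "P = proj_pt (vadd (sm (a/b) u) w)" using ab False pp_sm by simp
    then show ?thesis by simp
  qed
next
  fix P assume "P \<in> insert (proj_pt u) (range (\<lambda>l. proj_pt (vadd (sm l u) w)))"
  then consider "P = proj_pt u" | l where "P = proj_pt (vadd (sm l u) w)" by blast
  then show "P \<in> line_of u w"
  proof cases
    case 1 then show ?thesis by (simp add: mem_lineI1)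
  next
    case 2 then show ?thesis using mem_lineI[of l 1 u w] by simp
  qed
qed

lemma line_param_inj:
  assumes ind: "indep u w"
  shows "inj (\<lambda>l. proj_pt (vadd (sm l u) w))"
proof (rule injI)
  fix x y assume "proj_pt (vadd (sm x u) w) = proj_pt (vadd (sm y u) w)"
  then obtain c where c: "vadd (sm y u) w = sm c (vadd (sm x u) w)" by (metis pp_eqD)
  have "vadd (sm (y - c*x) u) (sm (1 - c) w) = vadd (vadd (sm y u) w) (sm (-1) (sm c (vadd (sm x u) w)))"
    by (cases w rule: prod_cases4; cases u rule: prod_cases4) (simp add: algebra_simps)
  then have "vadd (sm (y - c*x) u) (sm (1 - c) w) = zero4" by (simp only: c vadd_neg)
  then have "y - c*x = 0 \<and> 1 - c = 0" using ind unfolding indep_def by blast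
  then show "x = y" by simp
qed

lemma line_param_notin:
  assumes ind: "indep u w"
  shows "proj_pt u \<notin> range (\<lambda>l. proj_pt (vadd (sm l u) w))"
proof
  assume "proj_pt u \<in> range (\<lambda>l. proj_pt (vadd (sm l u) w))"
  then obtain x where "proj_pt u = proj_pt (vadd (sm x u) w)" by auto
  then obtain c where c: "vadd (sm x u) w = sm c u" by (metis pp_eqD)
  have "vadd (sm (x - c) u) (sm 1 w) = vadd (vadd (sm x u) w) (sm (-1) (sm c u))"
    by (cases w rule: prod_cases4; cases u rule: prod_cases4) (simp add: algebra_simps)
  then have "vadd (sm (x - c) u) (sm 1 w) = zero4" by (simp only: c vadd_neg)
  then show False using ind unfolding indep_def by fastforce
qed

lemma card_line_inter:
  fixes K :: "'a::{field,finite} vec4 set set"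
  assumes ind: "indep u w"
  shows "card (line_of u w \<inter> K) = (if proj_pt u \<in> K then 1 else 0) + card {l. proj_pt (vadd (sm l u) w) \<in> K}"
proof -
  let ?f = "\<lambda>l. proj_pt (vadd (sm l u) w)"
  have e: "line_of u w \<inter> K = (if proj_pt u \<in> K then {proj_pt u} else {}) \<union> ?f ` {l. ?f l \<in> K}"
    using line_param[OF ind] by auto
  have "card (?f ` {l. ?f l \<in> K}) = card {l. ?f l \<in> K}"
    using line_param_inj[OF ind] by (simp add: card_image inj_on_subset)
  moreover have "proj_pt u \<notin> ?f ` {l. ?f l \<in> K}" using line_param_notin[OF ind] by auto
  ultimately show ?thesis unfolding e by (simp add: card_insert_if)
qed

section \<open>Cubic points and osculating planes\<close>

lemma cubic_pt_inj: "cubic_pt s = cubic_pt t \<Longrightarrow> s = t"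
  unfolding cubic_pt_def by (auto dest!: pp_eqD)

lemma cubic_pt_ne_inf[simp]: "cubic_pt t \<noteq> cubic_inf"
  unfolding cubic_pt_def cubic_inf_def by (auto dest!: pp_eqD)

lemma TC_memD:
  "proj_pt x \<in> TC \<Longrightarrow> (\<exists>c t. c \<noteq> 0 \<and> x = sm c (1, t, t^2, t^3)) \<or> (\<exists>c. c \<noteq> 0 \<and> x = sm c (0,0,0,1))"
proof -
  assume "proj_pt x \<in> TC"
  then have "(\<exists>t. proj_pt x = proj_pt (1, t, t^2, t^3)) \<or> proj_pt x = proj_pt (0,0,0,1)"
    unfolding TC_def cubic_pt_def cubic_inf_def by auto
  then show ?thesis by (metis pp_eqD)
qed

lemma mem_osc: "proj_pt v \<in> osc_plane t \<longleftrightarrow> v \<noteq> zero4 \<and> - (t^3) * fst v + 3*t^2 * fst (snd v) - 3*t * fst (snd (snd v)) + snd (snd (snd v)) = 0"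
  unfolding osc_plane_def mem_plane by (cases v rule: prod_cases4) (simp add: algebra_simps)

lemma mem_osc_inf: "proj_pt v \<in> osc_inf \<longleftrightarrow> v \<noteq> zero4 \<and> fst v = 0"
  unfolding osc_inf_def mem_plane by (cases v rule: prod_cases4) simp

lemma cubic_in_osc: "cubic_pt s \<in> osc_plane t \<longleftrightarrow> s = t"
proof -
  have "- (t^3) * 1 + 3*t^2 * s - 3*t * s^2 + s^3 = (s - t)^3" by algebra
  then show ?thesis unfolding cubic_pt_def mem_osc by (simp add: zero4_def)
qed

lemma inf_notin_osc[simp]: "cubic_inf \<notin> osc_plane t"
  unfolding cubic_inf_def mem_osc by simp

lemma inf_in_osc_inf[simp]: "cubic_inf \<in> osc_inf"
  unfolding cubic_inf_def mem_osc_inf by (simp add: zero4_def)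

lemma cubic_notin_osc_inf[simp]: "cubic_pt t \<notin> osc_inf"
  unfolding cubic_pt_def mem_osc_inf by simp

lemma osc_plane_inj: "osc_plane s = osc_plane t \<Longrightarrow> s = t"
  using cubic_in_osc by metis

lemma osc_plane_ne_inf[simp]: "osc_plane t \<noteq> osc_inf"
  using inf_notin_osc inf_in_osc_inf by metis

lemma card_osc_through:
  fixes P :: "'a::{field,finite} vec4 set"
  shows "card {\<pi> \<in> Osc. P \<in> \<pi>} = (if P \<in> osc_inf then 1 else 0) + card {u. P \<in> osc_plane u}"
proof -
  have e: "{\<pi> \<in> Osc. P \<in> \<pi>} = (if P \<in> osc_inf then {osc_inf} else {}) \<union> osc_plane ` {u. P \<in> osc_plane u}"
    unfolding Osc_def by auto
  have "card (osc_plane ` {u. P \<in> osc_plane u}) = card {u. P \<in> osc_plane u}"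
    by (rule card_image) (meson inj_onI osc_plane_inj)
  moreover have "osc_inf \<notin> osc_plane ` {u. P \<in> osc_plane u}" by (metis imageE osc_plane_ne_inf)
  ultimately show ?thesis unfolding e by (simp add: card_insert_if)
qed

lemma card_TC_inter:
  fixes \<pi> :: "'a::{field,finite} vec4 set set"
  shows "card (\<pi> \<inter> TC) = (if cubic_inf \<in> \<pi> then 1 else 0) + card {u. cubic_pt u \<in> \<pi>}"
proof -
  have e: "\<pi> \<inter> TC = (if cubic_inf \<in> \<pi> then {cubic_inf} else {}) \<union> cubic_pt ` {u. cubic_pt u \<in> \<pi>}"
    unfolding TC_def by auto
  have "card (cubic_pt ` {u. cubic_pt u \<in> \<pi>}) = card {u. cubic_pt u \<in> \<pi>}"
    by (rule card_image) (meson inj_onI cubic_pt_inj)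
  moreover have "cubic_inf \<notin> cubic_pt ` {u. cubic_pt u \<in> \<pi>}" by (metis imageE cubic_pt_ne_inf)
  ultimately show ?thesis unfolding e by (simp add: card_insert_if)
qed

section \<open>Counting in finite fields\<close>

definition nzsq :: "'a::field \<Rightarrow> bool" where "nzsq y = (y \<noteq> 0 \<and> (\<exists>x. y = x^2))"
definition nsq :: "'a::field \<Rightarrow> bool" where "nsq y = (\<not> (\<exists>x. y = x^2))"

lemma sq_eq_sq_iff:
  fixes x y :: "'a::field"
  shows "y^2 = x^2 \<longleftrightarrow> y = x \<or> y = -x"
proof -
  have "y^2 - x^2 = (y - x) * (y + x)" by algebra
  then have "y^2 = x^2 \<longleftrightarrow> (y - x) * (y + x) = 0" by (metis eq_iff_diff_eq_0)
  then show ?thesis by (auto simp: add_eq_0_iff2)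
qed

lemma two_ne: fixes x :: "'a::field" assumes "(2::'a) \<noteq> 0" "x \<noteq> 0" shows "x \<noteq> -x"
proof
  assume "x = -x" then have "2 * x = 0" by (metis mult_2 add_eq_0_iff2)
  then show False using assms by simp
qed

lemma card_sqrt:
  fixes D :: "'a::{field,finite}"
  assumes two: "(2::'a) \<noteq> 0"
  shows "card {y. y^2 = D} = (if D = 0 then 1 else if nzsq D then 2 else 0)"
proof (cases "D = 0")
  case True then show ?thesis by simp
next
  case False
  show ?thesis
  proof (cases "nzsq D")
    case True
    then obtain x where x: "D = x^2" "x \<noteq> 0" unfolding nzsq_def using False by auto
    then have "{y. y^2 = D} = {x, -x}" using sq_eq_sq_iff by auto
    then show ?thesis using two_ne[OF two x(2)] True False by simp
  next
    case nz: False
    then have "{y. y^2 = D} = {}" using False unfolding nzsq_def by auto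
    then show ?thesis using nz False by simp
  qed
qed

lemma card_nzsq:
  assumes two: "(2::'a::{field,finite}) \<noteq> 0"
  shows "2 * card {y::'a. nzsq y} = card (UNIV::'a set) - 1"
proof -
  let ?S = "{y::'a. nzsq y}"
  have U: "UNIV - {0::'a} = (\<Union>y\<in>?S. {x. x^2 = y})" unfolding nzsq_def by auto
  have "card (\<Union>y\<in>?S. {x. x^2 = y}) = (\<Sum>y\<in>?S. card {x. x^2 = y})"
    by (rule card_UN_disjoint) auto
  also have "\<dots> = (\<Sum>y\<in>?S. 2)" using card_sqrt[OF two] by (intro sum.cong) (auto simp: nzsq_def)
  also have "\<dots> = 2 * card ?S" by simp
  moreover have "card (UNIV - {0::'a}) = card (UNIV::'a set) - 1" by (simp add: card_Diff_singleton)
  ultimately show ?thesis by (simp only: U)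
qed

lemma card_nsq:
  assumes two: "(2::'a::{field,finite}) \<noteq> 0"
  shows "card {y::'a. nsq y} = card {y::'a. nzsq y}"
proof -
  have U: "UNIV = {0::'a} \<union> {y. nzsq y} \<union> {y. nsq y}" unfolding nzsq_def nsq_def by auto
  have "card (UNIV::'a set) = card ({0::'a} \<union> {y. nzsq y} \<union> {y. nsq y})" using U by simp
  also have "\<dots> = 1 + card {y::'a. nzsq y} + card {y::'a. nsq y}"
    by (subst card_Un_disjoint, simp, simp, fastforce simp: nzsq_def nsq_def)
       (subst card_Un_disjoint, auto simp: nzsq_def)
  finally show ?thesis using card_nzsq[OF two] by simp
qed

lemma card_nzsq_half:
  assumes two: "(2::'a::{field,finite}) \<noteq> 0"
  shows "card {y::'a. nzsq y} = (card (UNIV::'a set) - 1) div 2"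
  using card_nzsq[OF two] by simp

lemma card_nsq_half:
  assumes two: "(2::'a::{field,finite}) \<noteq> 0"
  shows "card {y::'a. nsq y} = (card (UNIV::'a set) - 1) div 2"
  using card_nzsq[OF two] card_nsq[OF two] by simp

lemma card_affine:
  fixes a c :: "'a::{field,finite}"
  assumes c: "c \<noteq> 0"
  shows "card {x. P (a + c*x)} = card {y. P y}"
proof -
  have "bij_betw (\<lambda>x. a + c*x) {x. P (a + c*x)} {y. P y}"
    unfolding bij_betw_def
  proof
    show "inj_on (\<lambda>x. a + c*x) {x. P (a + c*x)}" using c by (auto intro: inj_onI)
    show "(\<lambda>x. a + c*x) ` {x. P (a + c*x)} = {y. P y}"
    proof (intro set_eqI iffI)
      fix y assume "y \<in> {y. P y}"
      then have "y = a + c * ((y - a)/c)" "P (a + c * ((y - a)/c))" using c by auto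
      then show "y \<in> (\<lambda>x. a + c*x) ` {x. P (a + c*x)}" by blast
    qed auto
  qed
  then show ?thesis by (rule bij_betw_same_card)
qed

lemma card_quad:
  fixes a b c :: "'a::{field,finite}"
  assumes two: "(2::'a) \<noteq> 0" and a: "a \<noteq> 0"
  shows "card {u. a*u^2 + b*u + c = 0} = card {y. y^2 = b^2 - 4*a*c}"
proof -
  have "\<And>u. a*u^2 + b*u + c = 0 \<longleftrightarrow> (b + (2*a)*u)^2 = b^2 - 4*a*c"
  proof -
    fix u
    have "(b + (2*a)*u)^2 - (b^2 - 4*a*c) = (4*a) * (a*u^2 + b*u + c)" by algebra
    moreover have "4*a \<noteq> 0" using two a by (metis mult_eq_0_iff mult_2_right numeral_Bit0 one_add_one)
    ultimately show "a*u^2 + b*u + c = 0 \<longleftrightarrow> (b + (2*a)*u)^2 = b^2 - 4*a*c"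
      by (metis eq_iff_diff_eq_0 mult_eq_0_iff)
  qed
  then have "{u. a*u^2 + b*u + c = 0} = {u. (b + (2*a)*u)^2 = b^2 - 4*a*c}" by simp
  also have "card \<dots> = card {y. y^2 = b^2 - 4*a*c}"
    by (rule card_affine) (use two a in simp)
  finally show ?thesis .
qed

definition lin :: "('a::field vec4 \<Rightarrow> 'a vec4) \<Rightarrow> bool" where
  "lin \<phi> = ((\<forall>c v. \<phi> (sm c v) = sm c (\<phi> v)) \<and> (\<forall>u v. \<phi> (vadd u v) = vadd (\<phi> u) (\<phi> v)))"

definition pim :: "('a::field vec4 \<Rightarrow> 'a vec4) \<Rightarrow> 'a vec4 set \<Rightarrow> 'a vec4 set" where
  "pim \<phi> P = \<phi> ` P"

definition lim :: "('a::field vec4 \<Rightarrow> 'a vec4) \<Rightarrow> 'a vec4 set set \<Rightarrow> 'a vec4 set set" where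
  "lim \<phi> l = pim \<phi> ` l"

definition good :: "('a::field vec4 \<Rightarrow> 'a vec4) \<Rightarrow> ('a vec4 \<Rightarrow> 'a vec4) \<Rightarrow> bool" where
  "good \<phi> \<psi> = (lin \<phi> \<and> lin \<psi> \<and> (\<forall>v. \<psi> (\<phi> v) = v) \<and> (\<forall>v. \<phi> (\<psi> v) = v) \<and>
     pim \<phi> ` TC \<subseteq> TC \<and> pim \<psi> ` TC \<subseteq> TC \<and> lim \<phi> ` Osc \<subseteq> Osc \<and> lim \<psi> ` Osc \<subseteq> Osc \<and>
     lim \<phi> ` Tan \<subseteq> Tan \<and> lim \<psi> ` Tan \<subseteq> Tan)"

lemma good_sym: "good \<phi> \<psi> \<Longrightarrow> good \<psi> \<phi>"
  unfolding good_def by (elim conjE) (intro conjI; assumption)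

lemma lin_sm: "lin \<phi> \<Longrightarrow> \<phi> (sm c v) = sm c (\<phi> v)" unfolding lin_def by blast
lemma lin_vadd: "lin \<phi> \<Longrightarrow> \<phi> (vadd u v) = vadd (\<phi> u) (\<phi> v)" unfolding lin_def by blast
lemma lin_zero: "lin \<phi> \<Longrightarrow> \<phi> zero4 = zero4"
  using lin_sm[of \<phi> 0 zero4] by simp

lemma good_lin: "good \<phi> \<psi> \<Longrightarrow> lin \<phi>" unfolding good_def by (simp del: split_paired_All)
lemma good_inv: "good \<phi> \<psi> \<Longrightarrow> \<psi> (\<phi> v) = v" unfolding good_def by (simp del: split_paired_All)
lemma good_inv2: "good \<phi> \<psi> \<Longrightarrow> \<phi> (\<psi> v) = v" unfolding good_def by (simp del: split_paired_All)

lemma good_nz: "good \<phi> \<psi> \<Longrightarrow> v \<noteq> zero4 \<Longrightarrow> \<phi> v \<noteq> zero4"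
proof
  assume g: "good \<phi> \<psi>" and v: "v \<noteq> zero4" and "\<phi> v = zero4"
  then have "\<psi> (\<phi> v) = zero4" using lin_zero[OF good_lin[OF good_sym[OF g]]] by simp
  then show False using v good_inv[OF g] by simp
qed

lemma pim_pp: "lin \<phi> \<Longrightarrow> pim \<phi> (proj_pt v) = proj_pt (\<phi> v)"
proof -
  assume l: "lin \<phi>"
  have e: "\<And>w. {sm c w |c. c \<noteq> 0} = (\<lambda>c. sm c w) ` {c. c \<noteq> 0}" by auto
  show ?thesis unfolding pim_def proj_pt_def e image_image using l by (simp add: lin_sm)
qed

lemma pim_pim: "good \<phi> \<psi> \<Longrightarrow> pim \<psi> (pim \<phi> P) = P"
  unfolding pim_def by (simp add: image_image good_inv)

lemma lim_lim: "good \<phi> \<psi> \<Longrightarrow> lim \<psi> (lim \<phi> l) = l"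
  unfolding lim_def by (simp add: image_image pim_pim)

lemma pim_inj: "good \<phi> \<psi> \<Longrightarrow> inj (pim \<phi>)"
proof (rule injI)
  fix x y assume "good \<phi> \<psi>" "pim \<phi> x = pim \<phi> y"
  then show "x = y" using pim_pim[of \<phi> \<psi>] by metis
qed

lemma lim_inj: "good \<phi> \<psi> \<Longrightarrow> inj (lim \<phi>)"
proof (rule injI)
  fix x y assume "good \<phi> \<psi>" "lim \<phi> x = lim \<phi> y"
  then show "x = y" using lim_lim[of \<phi> \<psi>] by metis
qed

lemma img_eq:
  assumes "f ` A \<subseteq> A" "g ` A \<subseteq> A" "\<forall>x. f (g x) = x" shows "f ` A = A"
proof (rule subset_antisym)
  show "A \<subseteq> f ` A"
  proof
    fix x assume "x \<in> A"
    then have "g x \<in> A" using assms(2) by blast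
    then show "x \<in> f ` A" using assms(3) by (metis image_eqI)
  qed
qed (rule assms(1))

lemma good_TC: "good \<phi> \<psi> \<Longrightarrow> pim \<phi> ` TC = TC"
  by (rule img_eq[of _ _ "pim \<psi>"]) (auto simp: good_def pim_pim[OF good_sym])

lemma good_Osc: "good \<phi> \<psi> \<Longrightarrow> lim \<phi> ` Osc = Osc"
  by (rule img_eq[of _ _ "lim \<psi>"]) (auto simp: good_def lim_lim[OF good_sym])

lemma good_Tan: "good \<phi> \<psi> \<Longrightarrow> lim \<phi> ` Tan = Tan"
  by (rule img_eq[of _ _ "lim \<psi>"]) (auto simp: good_def lim_lim[OF good_sym])

lemma pim_mem_iff: "good \<phi> \<psi> \<Longrightarrow> pim \<phi> P \<in> lim \<phi> l \<longleftrightarrow> P \<in> l"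
  unfolding lim_def by (meson inj_image_mem_iff pim_inj)

lemma lim_sub_iff: "good \<phi> \<psi> \<Longrightarrow> lim \<phi> l \<subseteq> lim \<phi> m \<longleftrightarrow> l \<subseteq> m"
  unfolding lim_def by (meson inj_image_subset_iff pim_inj)

lemma TC_iff: "good \<phi> \<psi> \<Longrightarrow> pim \<phi> P \<in> TC \<longleftrightarrow> P \<in> TC"
  by (metis good_TC inj_image_mem_iff pim_inj)

lemma Osc_iff: "good \<phi> \<psi> \<Longrightarrow> lim \<phi> \<pi> \<in> Osc \<longleftrightarrow> \<pi> \<in> Osc"
  by (metis good_Osc inj_image_mem_iff lim_inj)

lemma Tan_iff: "good \<phi> \<psi> \<Longrightarrow> lim \<phi> \<pi> \<in> Tan \<longleftrightarrow> \<pi> \<in> Tan"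
  by (metis good_Tan inj_image_mem_iff lim_inj)

lemma good_points: "good \<phi> \<psi> \<Longrightarrow> P \<in> points \<Longrightarrow> pim \<phi> P \<in> points"
proof -
  assume g: "good \<phi> \<psi>" and "P \<in> points"
  then obtain v where v: "P = proj_pt v" "v \<noteq> zero4" unfolding points_def by blast
  then have "pim \<phi> P = proj_pt (\<phi> v)" "\<phi> v \<noteq> zero4" using g by (auto simp: pim_pp good_lin good_nz)
  then show ?thesis unfolding points_def by blast
qed

lemma line_of_img: "line_of u w = (\<lambda>(a,b). proj_pt (vadd (sm a u) (sm b w))) ` {(a,b). a \<noteq> 0 \<or> b \<noteq> 0}"
  unfolding line_of_def by auto

lemma lim_line: "lin \<phi> \<Longrightarrow> lim \<phi> (line_of u w) = line_of (\<phi> u) (\<phi> w)"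
  unfolding lim_def line_of_img[of u] line_of_img[of "\<phi> u"] image_image
  by (intro image_cong refl) (auto simp: pim_pp lin_sm lin_vadd)

lemma good_indep: "good \<phi> \<psi> \<Longrightarrow> indep u w \<Longrightarrow> indep (\<phi> u) (\<phi> w)"
  unfolding indep_def
proof (intro allI impI)
  fix a b assume g: "good \<phi> \<psi>" and i: "\<forall>a b. vadd (sm a u) (sm b w) = zero4 \<longrightarrow> a = 0 \<and> b = 0"
    and z: "vadd (sm a (\<phi> u)) (sm b (\<phi> w)) = zero4"
  have "\<phi> (vadd (sm a u) (sm b w)) = zero4" using z good_lin[OF g] by (simp add: lin_sm lin_vadd)
  then have "vadd (sm a u) (sm b w) = zero4" using good_inv[OF g] lin_zero[OF good_lin[OF good_sym[OF g]]] by metis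
  then show "a = 0 \<and> b = 0" using i by blast
qed

lemma good_lines: "good \<phi> \<psi> \<Longrightarrow> l \<in> lines \<Longrightarrow> lim \<phi> l \<in> lines"
  unfolding lines_def using lim_line good_lin good_indep by blast

lemma dot_expand: "lin \<psi> \<Longrightarrow> dot h (\<psi> y) = dot (dot h (\<psi> (1,0,0,0)), dot h (\<psi> (0,1,0,0)), dot h (\<psi> (0,0,1,0)), dot h (\<psi> (0,0,0,1))) y"
proof -
  assume l: "lin \<psi>"
  obtain y0 y1 y2 y3 where y: "y = (y0,y1,y2,y3)" by (cases y rule: prod_cases4)
  have "y = vadd (sm y0 (1,0,0,0)) (vadd (sm y1 (0,1,0,0)) (vadd (sm y2 (0,0,1,0)) (sm y3 (0,0,0,1))))"
    unfolding y by simp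
  then have "\<psi> y = \<psi> (vadd (sm y0 (1,0,0,0)) (vadd (sm y1 (0,1,0,0)) (vadd (sm y2 (0,0,1,0)) (sm y3 (0,0,0,1)))))"
    by simp
  also have "\<dots> = vadd (sm y0 (\<psi> (1,0,0,0))) (vadd (sm y1 (\<psi> (0,1,0,0))) (vadd (sm y2 (\<psi> (0,0,1,0))) (sm y3 (\<psi> (0,0,0,1)))))"
    using l by (simp only: lin_sm lin_vadd)
  finally show ?thesis unfolding y by (simp add: algebra_simps del: dot.simps) (simp add: algebra_simps)
qed

lemma plane_img:
  assumes g: "good \<phi> \<psi>" and hh: "\<And>y. dot h (\<psi> y) = 0 \<longleftrightarrow> dot h' y = 0"
  shows "lim \<phi> (plane_of h) = plane_of h'"
proof (intro set_eqI iffI)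
  fix Q assume "Q \<in> lim \<phi> (plane_of h)"
  then obtain v where v: "Q = pim \<phi> (proj_pt v)" "v \<noteq> zero4" "dot h v = 0"
    unfolding lim_def by (auto dest: plane_elem)
  then have "Q = proj_pt (\<phi> v)" using g by (simp add: pim_pp good_lin)
  moreover have "dot h' (\<phi> v) = 0" using hh[of "\<phi> v"] v g by (simp add: good_inv)
  ultimately show "Q \<in> plane_of h'" using mem_plane good_nz[OF g v(2)] by blast
next
  fix Q assume "Q \<in> plane_of h'"
  then obtain y where y: "Q = proj_pt y" "y \<noteq> zero4" "dot h' y = 0" by (auto dest: plane_elem)
  have "\<psi> y \<noteq> zero4" using good_nz[OF good_sym[OF g] y(2)] .
  moreover have "dot h (\<psi> y) = 0" using hh y by simp
  ultimately have "proj_pt (\<psi> y) \<in> plane_of h" using mem_plane by blast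
  moreover have "pim \<phi> (proj_pt (\<psi> y)) = Q" using g y by (simp add: pim_pp good_lin good_inv2)
  ultimately show "Q \<in> lim \<phi> (plane_of h)" unfolding lim_def by blast
qed

lemma good_planes: assumes g: "good \<phi> \<psi>" and p: "\<pi> \<in> planes" shows "lim \<phi> \<pi> \<in> planes"
proof -
  obtain h where h: "\<pi> = plane_of h" "h \<noteq> zero4" using p unfolding planes_def by auto
  define h' where "h' = (dot h (\<psi> (1,0,0,0)), dot h (\<psi> (0,1,0,0)), dot h (\<psi> (0,0,1,0)), dot h (\<psi> (0,0,0,1)))"
  have e: "\<And>y. dot h (\<psi> y) = dot h' y" unfolding h'_def using dot_expand good_lin[OF good_sym[OF g]] by blast
  have pl: "lim \<phi> \<pi> = plane_of h'" unfolding h(1) by (rule plane_img[OF g]) (simp add: e)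
  have "h' \<noteq> zero4"
  proof
    assume z: "h' = zero4"
    obtain h0 h1 h2 h3 where hh: "h = (h0,h1,h2,h3)" by (cases h rule: prod_cases4)
    have "dot h (1,0,0,0) \<noteq> 0 \<or> dot h (0,1,0,0) \<noteq> 0 \<or> dot h (0,0,1,0) \<noteq> 0 \<or> dot h (0,0,0,1) \<noteq> 0"
      using h(2) unfolding hh zero4_def by auto
    then obtain v where v: "dot h v \<noteq> 0" by blast
    have "dot h' y = 0" for y using z by (cases y rule: prod_cases4) (simp add: zero4_def)
    then have "dot h (\<psi> (\<phi> v)) = 0" using e by simp
    then show False using v g by (simp add: good_inv)
  qed
  then show ?thesis using pl unfolding planes_def by blast
qed

lemma osc_through_img:
  assumes g: "good \<phi> \<psi>"
  shows "{\<pi> \<in> Osc. pim \<phi> P \<in> \<pi>} = lim \<phi> ` {\<pi> \<in> Osc. P \<in> \<pi>}"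
proof (intro set_eqI iffI)
  fix \<pi> assume "\<pi> \<in> {\<pi> \<in> Osc. pim \<phi> P \<in> \<pi>}"
  then obtain \<pi>' where "\<pi> = lim \<phi> \<pi>'" "\<pi>' \<in> Osc" "pim \<phi> P \<in> lim \<phi> \<pi>'"
    using good_Osc[OF g] by (metis (no_types, lifting) imageE mem_Collect_eq)
  then show "\<pi> \<in> lim \<phi> ` {\<pi> \<in> Osc. P \<in> \<pi>}" using pim_mem_iff[OF g] by blast
qed (use pim_mem_iff[OF g] Osc_iff[OF g] in auto)

lemma card_osc_through_img:
  assumes g: "good \<phi> \<psi>"
  shows "card {\<pi> \<in> Osc. pim \<phi> P \<in> \<pi>} = card {\<pi> \<in> Osc. P \<in> \<pi>}"
  unfolding osc_through_img[OF g] by (meson card_image inj_on_subset lim_inj[OF g] subset_UNIV)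

lemma TC_img_card: assumes g: "good \<phi> \<psi>" shows "card (lim \<phi> \<pi> \<inter> TC) = card (\<pi> \<inter> TC)"
proof -
  have "lim \<phi> \<pi> \<inter> TC = pim \<phi> ` (\<pi> \<inter> TC)"
    using good_TC[OF g] pim_inj[OF g] unfolding lim_def by (metis image_Int)
  then show ?thesis by (metis card_image inj_on_subset pim_inj[OF g] subset_UNIV)
qed

lemma TC_img_empty: assumes g: "good \<phi> \<psi>" shows "lim \<phi> \<pi> \<inter> TC = {} \<longleftrightarrow> \<pi> \<inter> TC = {}"
proof -
  have "lim \<phi> \<pi> \<inter> TC = pim \<phi> ` (\<pi> \<inter> TC)"
    using good_TC[OF g] pim_inj[OF g] unfolding lim_def by (metis image_Int)
  then show ?thesis by simp
qed

lemma P_sub: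
  assumes g: "good \<phi> \<psi>"
  shows "pim \<phi> ` P1 \<subseteq> P1" "pim \<phi> ` P2 \<subseteq> P2" "pim \<phi> ` P3 \<subseteq> P3" "pim \<phi> ` P4 \<subseteq> P4" "pim \<phi> ` P5 \<subseteq> P5"
proof -
  show "pim \<phi> ` P1 \<subseteq> P1" unfolding P1_def using TC_iff[OF g] by blast
  show "pim \<phi> ` P2 \<subseteq> P2"
  proof
    fix Q assume "Q \<in> pim \<phi> ` P2"
    then obtain P l where P: "Q = pim \<phi> P" "P \<in> points" "P \<notin> TC" "l \<in> Tan" "P \<in> l"
      unfolding P2_def by blast
    have "lim \<phi> l \<in> Tan" "Q \<in> lim \<phi> l" using P Tan_iff[OF g] pim_mem_iff[OF g] by auto
    moreover have "Q \<in> points" "Q \<notin> TC" using P good_points[OF g] TC_iff[OF g] by auto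
    ultimately show "Q \<in> P2" unfolding P2_def by blast
  qed
  show "pim \<phi> ` P3 \<subseteq> P3"
  proof
    fix Q assume "Q \<in> pim \<phi> ` P3"
    then obtain P where P: "Q = pim \<phi> P" "P \<in> points" "P \<notin> TC" "card {\<pi> \<in> Osc. P \<in> \<pi>} = 3"
      unfolding P3_def by blast
    have "Q \<in> points" "Q \<notin> TC" "card {\<pi> \<in> Osc. Q \<in> \<pi>} = 3"
      using P good_points[OF g] TC_iff[OF g] card_osc_through_img[OF g] by auto
    then show "Q \<in> P3" unfolding P3_def by blast
  qed
  show "pim \<phi> ` P4 \<subseteq> P4"
  proof
    fix Q assume "Q \<in> pim \<phi> ` P4"
    then obtain P where P: "Q = pim \<phi> P" "P \<in> points" "P \<notin> TC" "card {\<pi> \<in> Osc. P \<in> \<pi>} = 1"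
      unfolding P4_def by blast
    have "Q \<in> points" "Q \<notin> TC" "card {\<pi> \<in> Osc. Q \<in> \<pi>} = 1"
      using P good_points[OF g] TC_iff[OF g] card_osc_through_img[OF g] by auto
    then show "Q \<in> P4" unfolding P4_def by blast
  qed
  show "pim \<phi> ` P5 \<subseteq> P5"
  proof
    fix Q assume "Q \<in> pim \<phi> ` P5"
    then obtain P where P: "Q = pim \<phi> P" "P \<in> points" "\<forall>\<pi>\<in>Osc. P \<notin> \<pi>" unfolding P5_def by blast
    have "\<forall>\<pi>\<in>Osc. Q \<notin> \<pi>"
    proof (intro ballI notI)
      fix \<pi> assume "\<pi> \<in> Osc" "Q \<in> \<pi>"
      then obtain \<pi>' where "\<pi> = lim \<phi> \<pi>'" "\<pi>' \<in> Osc" using good_Osc[OF g] by (metis imageE)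
      then show False using P \<open>Q \<in> \<pi>\<close> pim_mem_iff[OF g] by blast
    qed
    moreover have "Q \<in> points" using P good_points[OF g] by blast
    ultimately show "Q \<in> P5" unfolding P5_def by blast
  qed
qed

lemma H_sub:
  assumes g: "good \<phi> \<psi>"
  shows "lim \<phi> ` H1 \<subseteq> H1" "lim \<phi> ` H2 \<subseteq> H2" "lim \<phi> ` H3 \<subseteq> H3" "lim \<phi> ` H4 \<subseteq> H4" "lim \<phi> ` H5 \<subseteq> H5"
proof -
  show "lim \<phi> ` H1 \<subseteq> H1" unfolding H1_def using Osc_iff[OF g] by blast
  show "lim \<phi> ` H2 \<subseteq> H2" unfolding H2_def
  proof
    fix Q assume "Q \<in> lim \<phi> ` {\<pi> \<in> planes. card (\<pi> \<inter> TC) = 2}"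
    then obtain \<pi> where "Q = lim \<phi> \<pi>" "\<pi> \<in> planes" "card (\<pi> \<inter> TC) = 2" by blast
    then show "Q \<in> {\<pi> \<in> planes. card (\<pi> \<inter> TC) = 2}" using good_planes[OF g] TC_img_card[OF g] by simp
  qed
  show "lim \<phi> ` H3 \<subseteq> H3" unfolding H3_def
  proof
    fix Q assume "Q \<in> lim \<phi> ` {\<pi> \<in> planes. card (\<pi> \<inter> TC) = 3}"
    then obtain \<pi> where "Q = lim \<phi> \<pi>" "\<pi> \<in> planes" "card (\<pi> \<inter> TC) = 3" by blast
    then show "Q \<in> {\<pi> \<in> planes. card (\<pi> \<inter> TC) = 3}" using good_planes[OF g] TC_img_card[OF g] by simp
  qed
  show "lim \<phi> ` H4 \<subseteq> H4" unfolding H4_def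
  proof
    fix Q assume "Q \<in> lim \<phi> ` {\<pi> \<in> planes. \<pi> \<notin> Osc \<and> card (\<pi> \<inter> TC) = 1}"
    then obtain \<pi> where "Q = lim \<phi> \<pi>" "\<pi> \<in> planes" "\<pi> \<notin> Osc" "card (\<pi> \<inter> TC) = 1" by blast
    then show "Q \<in> {\<pi> \<in> planes. \<pi> \<notin> Osc \<and> card (\<pi> \<inter> TC) = 1}"
      using good_planes[OF g] TC_img_card[OF g] Osc_iff[OF g] by simp
  qed
  show "lim \<phi> ` H5 \<subseteq> H5" unfolding H5_def
  proof
    fix Q assume "Q \<in> lim \<phi> ` {\<pi> \<in> planes. \<pi> \<inter> TC = {}}"
    then obtain \<pi> where "Q = lim \<phi> \<pi>" "\<pi> \<in> planes" "\<pi> \<inter> TC = {}" by blast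
    then show "Q \<in> {\<pi> \<in> planes. \<pi> \<inter> TC = {}}" using good_planes[OF g] TC_img_empty[OF g] by simp
  qed
qed

lemma P_eq:
  assumes g: "good \<phi> \<psi>"
  shows "pim \<phi> ` P1 = P1" "pim \<phi> ` P2 = P2" "pim \<phi> ` P3 = P3" "pim \<phi> ` P4 = P4" "pim \<phi> ` P5 = P5"
proof -
  have i: "\<forall>x. pim \<phi> (pim \<psi> x) = x" using pim_pim[OF good_sym[OF g]] by blast
  note s1 = P_sub[OF g] and s2 = P_sub[OF good_sym[OF g]]
  show "pim \<phi> ` P1 = P1" by (rule img_eq[OF s1(1) s2(1) i])
  show "pim \<phi> ` P2 = P2" by (rule img_eq[OF s1(2) s2(2) i])
  show "pim \<phi> ` P3 = P3" by (rule img_eq[OF s1(3) s2(3) i])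
  show "pim \<phi> ` P4 = P4" by (rule img_eq[OF s1(4) s2(4) i])
  show "pim \<phi> ` P5 = P5" by (rule img_eq[OF s1(5) s2(5) i])
qed

lemma H_eq:
  assumes g: "good \<phi> \<psi>"
  shows "lim \<phi> ` H1 = H1" "lim \<phi> ` H2 = H2" "lim \<phi> ` H3 = H3" "lim \<phi> ` H4 = H4" "lim \<phi> ` H5 = H5"
proof -
  have i: "\<forall>x. lim \<phi> (lim \<psi> x) = x" using lim_lim[OF good_sym[OF g]] by blast
  note s1 = H_sub[OF g] and s2 = H_sub[OF good_sym[OF g]]
  show "lim \<phi> ` H1 = H1" by (rule img_eq[OF s1(1) s2(1) i])
  show "lim \<phi> ` H2 = H2" by (rule img_eq[OF s1(2) s2(2) i])
  show "lim \<phi> ` H3 = H3" by (rule img_eq[OF s1(3) s2(3) i])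
  show "lim \<phi> ` H4 = H4" by (rule img_eq[OF s1(4) s2(4) i])
  show "lim \<phi> ` H5 = H5" by (rule img_eq[OF s1(5) s2(5) i])
qed

lemma card_inter_img:
  assumes g: "good \<phi> \<psi>" and K: "pim \<phi> ` K = K"
  shows "card (lim \<phi> l \<inter> K) = card (l \<inter> K)"
proof -
  have "lim \<phi> l \<inter> K = pim \<phi> ` (l \<inter> K)"
    using K image_Int[OF pim_inj[OF g]] unfolding lim_def by simp
  then show ?thesis using card_image[OF inj_on_subset[OF pim_inj[OF g] subset_UNIV]] by simp
qed

lemma card_planes_img:
  assumes g: "good \<phi> \<psi>" and K: "lim \<phi> ` K = K"
  shows "card {\<pi> \<in> K. lim \<phi> l \<subseteq> \<pi>} = card {\<pi> \<in> K. l \<subseteq> \<pi>}"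
proof -
  have "{\<pi> \<in> K. lim \<phi> l \<subseteq> \<pi>} = lim \<phi> ` {\<pi> \<in> K. l \<subseteq> \<pi>}"
  proof (intro set_eqI iffI)
    fix \<pi> assume "\<pi> \<in> {\<pi> \<in> K. lim \<phi> l \<subseteq> \<pi>}"
    then obtain \<pi>' where "\<pi> = lim \<phi> \<pi>'" "\<pi>' \<in> K" "lim \<phi> l \<subseteq> lim \<phi> \<pi>'" using K by (metis (no_types, lifting) imageE mem_Collect_eq)
    then show "\<pi> \<in> lim \<phi> ` {\<pi> \<in> K. l \<subseteq> \<pi>}" using lim_sub_iff[OF g] by blast
  next
    fix \<pi> assume "\<pi> \<in> lim \<phi> ` {\<pi> \<in> K. l \<subseteq> \<pi>}"
    then obtain \<pi>' where p: "\<pi> = lim \<phi> \<pi>'" "\<pi>' \<in> K" "l \<subseteq> \<pi>'" by blast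
    then have "\<pi> \<in> K" using K by blast
    moreover have "lim \<phi> l \<subseteq> \<pi>" using p lim_sub_iff[OF g] by blast
    ultimately show "\<pi> \<in> {\<pi> \<in> K. lim \<phi> l \<subseteq> \<pi>}" by blast
  qed
  then show ?thesis using card_image[OF inj_on_subset[OF lim_inj[OF g] subset_UNIV]] by simp
qed

lemma OD0_img: assumes g: "good \<phi> \<psi>" shows "OD0 (lim \<phi> l) = OD0 l"
  unfolding OD0_def using card_inter_img[OF g] P_eq[OF g] by (simp del: P1_def)

lemma OD2_img: assumes g: "good \<phi> \<psi>" shows "OD2 (lim \<phi> l) = OD2 l"
  unfolding OD2_def using card_planes_img[OF g] H_eq[OF g] by simp

lemma L3_img: assumes g: "good \<phi> \<psi>" and l: "l \<in> L3" shows "lim \<phi> l \<in> L3"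
proof -
  have "card (lim \<phi> l \<inter> TC) = 1" using l TC_img_card[OF g] unfolding L3_def by auto
  moreover have "\<exists>\<pi>\<in>Osc. lim \<phi> l \<subseteq> \<pi>" using l Osc_iff[OF g] lim_sub_iff[OF g] unfolding L3_def by blast
  moreover have "lim \<phi> l \<notin> Tan" using l Tan_iff[OF g] unfolding L3_def by auto
  ultimately show ?thesis using l good_lines[OF g] unfolding L3_def by auto
qed

lemma gact_lin: "lin (gact a b c d)"
  unfolding lin_def
proof (intro conjI allI)
  fix c' v show "gact a b c d (sm c' v) = sm c' (gact a b c d v)"
    by (cases v rule: prod_cases4) (simp add: algebra_simps)
next
  fix u v show "gact a b c d (vadd u v) = vadd (gact a b c d u) (gact a b c d v)"
    by (cases v rule: prod_cases4; cases u rule: prod_cases4) (simp add: algebra_simps)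
qed

lemma gact_comp: "gact a b c d (gact a' b' c' d' v) = gact (a'*a+b'*c) (a'*b+b'*d) (c'*a+d'*c) (c'*b+d'*d) v"
  by (cases v rule: prod_cases4) (simp add: algebra_simps power2_eq_square power3_eq_cube)

lemma gact_id[simp]: "gact 1 0 0 1 v = v"
  by (cases v rule: prod_cases4) simp


lemma plane_img2:
  assumes l1: "lin \<phi>" and l2: "lin \<psi>" and i1: "\<And>v. \<psi> (\<phi> v) = v" and i2: "\<And>v. \<phi> (\<psi> v) = v"
    and hh: "\<And>y. dot h (\<psi> y) = 0 \<longleftrightarrow> dot h' y = 0"
  shows "lim \<phi> (plane_of h) = plane_of h'"
proof (intro set_eqI iffI)
  have nz1: "\<phi> v \<noteq> zero4" if "v \<noteq> zero4" for v using that i1 lin_zero[OF l2] by metis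
  have nz2: "\<psi> v \<noteq> zero4" if "v \<noteq> zero4" for v using that i2 lin_zero[OF l1] by metis
  {
  fix Q assume "Q \<in> lim \<phi> (plane_of h)"
  then obtain v where v: "Q = pim \<phi> (proj_pt v)" "v \<noteq> zero4" "dot h v = 0"
    unfolding lim_def by (auto dest: plane_elem)
  then have "Q = proj_pt (\<phi> v)" using l1 by (simp add: pim_pp)
  moreover have "dot h' (\<phi> v) = 0" using hh[of "\<phi> v"] v i1 by simp
  ultimately show "Q \<in> plane_of h'" using mem_plane nz1[OF v(2)] by blast
  }
  {
  fix Q assume "Q \<in> plane_of h'"
  then obtain y where y: "Q = proj_pt y" "y \<noteq> zero4" "dot h' y = 0" by (auto dest: plane_elem)
  have "\<psi> y \<noteq> zero4" using nz2[OF y(2)] .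
  moreover have "dot h (\<psi> y) = 0" using hh y by simp
  ultimately have "proj_pt (\<psi> y) \<in> plane_of h" using mem_plane by blast
  moreover have "pim \<phi> (proj_pt (\<psi> y)) = Q" using l1 y i2 by (simp add: pim_pp)
  ultimately show "Q \<in> lim \<phi> (plane_of h)" unfolding lim_def by blast
  }
qed

section \<open>Translations\<close>

abbreviation T :: "'a::field \<Rightarrow> 'a vec4 \<Rightarrow> 'a vec4" where "T t \<equiv> gact 1 t 0 1"

lemma T_expl: "T t (y0,y1,y2,y3) = (y0, y0*t + y1, y0*t^2 + 2*t*y1 + y2, y0*t^3 + 3*t^2*y1 + 3*t*y2 + y3)"
  by (simp add: algebra_simps)

lemma T_inv: "T (-t) (T t v) = v"
  by (simp add: gact_comp)

lemma T_cubic: "pim (T t) (cubic_pt u) = cubic_pt (u + t)"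
proof -
  have e: "T t (1, u, u^2, u^3) = (1, u + t, (u+t)^2, (u+t)^3)"
    unfolding T_expl by (simp add: power2_eq_square power3_eq_cube algebra_simps)
  show ?thesis unfolding cubic_pt_def pim_pp[OF gact_lin] e ..
qed

lemma T_inf: "pim (T t) cubic_inf = cubic_inf"
  unfolding cubic_inf_def by (simp add: pim_pp gact_lin)

lemma T_osc: "lim (T t) (osc_plane u) = osc_plane (u + t)"
  unfolding osc_plane_def
proof (rule plane_img2[OF gact_lin gact_lin T_inv])
  fix v show "T t (T (-t) v) = v" using T_inv[of "-t"] by simp
next
  fix y :: "'a vec4"
  obtain y0 y1 y2 y3 where y: "y = (y0,y1,y2,y3)" by (cases y rule: prod_cases4)
  have "dot (- (u ^ 3), 3 * u\<^sup>2, - 3 * u, 1) (T (-t) y) = dot (- ((u + t) ^ 3), 3 * (u + t)\<^sup>2, - 3 * (u + t), 1) y"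
    unfolding y T_expl by (simp add: power2_eq_square power3_eq_cube algebra_simps)
  then show "(dot (- (u ^ 3), 3 * u\<^sup>2, - 3 * u, 1) (T (-t) y) = 0) = (dot (- ((u + t) ^ 3), 3 * (u + t)\<^sup>2, - 3 * (u + t), 1) y = 0)"
    by simp
qed

lemma T_osc_inf: "lim (T t) osc_inf = osc_inf"
  unfolding osc_inf_def
proof (rule plane_img2[OF gact_lin gact_lin T_inv])
  fix v show "T t (T (-t) v) = v" using T_inv[of "-t"] by simp
next
  fix y :: "'a vec4"
  show "(dot (1,0,0,0) (T (-t) y) = 0) = (dot (1,0,0,0) y = 0)"
    by (cases y rule: prod_cases4) simp
qed

lemma T_tan: "lim (T t) (line_of (1,u,u^2,u^3) (0,1,2*u,3*u^2)) = line_of (1,u+t,(u+t)^2,(u+t)^3) (0,1,2*(u+t),3*(u+t)^2)"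
proof -
  have e1: "T t (1, u, u^2, u^3) = (1, u + t, (u+t)^2, (u+t)^3)"
    unfolding T_expl by (simp add: power2_eq_square power3_eq_cube algebra_simps)
  have e2: "T t (0,1,2*u,3*u^2) = (0,1,2*(u+t),3*(u+t)^2)"
    unfolding T_expl by (simp add: power2_eq_square power3_eq_cube algebra_simps)
  show ?thesis unfolding lim_line[OF gact_lin] e1 e2 ..
qed

lemma T_tan_inf: "lim (T t) (line_of (0,0,0,1) (0,0,1,0)) = line_of (0,0,0,1) (0,0,1,0)"
proof -
  have "lim (T t) (line_of (0,0,0,1) (0,0,1,0)) = line_of (0,0,0,1) (0,0,1,3*t)"
    by (simp add: lim_line gact_lin)
  also have "\<dots> = line_of (0,0,0,1) (0,0,1,0)"
    by (rule span_change[of _ 1 _ 0 _ _ "3*t" 1]) simp_all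
  finally show ?thesis .
qed

lemma good_T: "good (T t) (T (-t))"
proof -
  have i2: "\<And>v. T t (T (-t) v) = v" using T_inv[of "-t"] by simp
  have tc: "pim (T s) ` TC \<subseteq> TC" for s
  proof
    fix x assume "x \<in> pim (T s) ` TC"
    then consider u where "x = pim (T s) (cubic_pt u)" | "x = pim (T s) cubic_inf"
      unfolding TC_def by blast
    then show "x \<in> TC" by cases (simp_all only: T_cubic T_inf TC_def Un_iff rangeI insertI1 simp_thms)
  qed
  have osc: "lim (T s) ` Osc \<subseteq> Osc" for s
  proof
    fix x assume "x \<in> lim (T s) ` Osc"
    then consider u where "x = lim (T s) (osc_plane u)" | "x = lim (T s) osc_inf"
      unfolding Osc_def by blast
    then show "x \<in> Osc" by cases (simp_all only: T_osc T_osc_inf Osc_def Un_iff rangeI insertI1 simp_thms)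
  qed
  have tan: "lim (T s) ` Tan \<subseteq> Tan" for s
  proof
    fix x assume "x \<in> lim (T s) ` Tan"
    then consider u where "x = lim (T s) (line_of (1,u,u^2,u^3) (0,1,2*u,3*u^2))" | "x = lim (T s) (line_of (0,0,0,1) (0,0,1,0))"
      unfolding Tan_def by blast
    then show "x \<in> Tan"
    proof cases
      case 1 show ?thesis unfolding Tan_def 1 T_tan
        by (rule UnI1, rule range_eqI[where x="u+s"], simp)
    next
      case 2 then show ?thesis unfolding Tan_def T_tan_inf by simp
    qed
  qed
  show ?thesis unfolding good_def
    by (intro conjI gact_lin tc osc tan allI T_inv i2)
qed

section \<open>Reversal\<close>

abbreviation S :: "'a::field vec4 \<Rightarrow> 'a vec4" where "S \<equiv> gact 0 1 1 0"

lemma S_expl: "S (y0,y1,y2,y3) = (y3,y2,y1,y0)"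
  by simp

lemma S_inv: "S (S v) = v"
  by (cases v rule: prod_cases4) simp

lemma S_cubic: "pim S (cubic_pt u) = (if u = 0 then cubic_inf else cubic_pt (1/u))"
proof (cases "u = 0")
  case True
  then show ?thesis unfolding cubic_pt_def cubic_inf_def by (simp add: pim_pp gact_lin)
next
  case False
  have e: "S (1, u, u^2, u^3) = sm (u^3) (1, 1/u, (1/u)^2, (1/u)^3)"
    using False by (simp add: power2_eq_square power3_eq_cube field_simps)
  show ?thesis unfolding cubic_pt_def pim_pp[OF gact_lin] e
    using False pp_sm[of "u^3" "(1, 1/u, (1/u)^2, (1/u)^3)"] by (simp del: sm.simps)
qed

lemma S_inf: "pim S cubic_inf = cubic_pt 0"
  unfolding cubic_inf_def cubic_pt_def by (simp add: pim_pp gact_lin)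

lemma S_osc: "lim S (osc_plane u) = (if u = 0 then osc_inf else osc_plane (1/u))"
proof (cases "u = 0")
  case True
  have "lim S (plane_of (- ((0::'a)^3), 3*0^2, -3*0, 1)) = plane_of (1,0,0,0)"
  proof (rule plane_img2[OF gact_lin gact_lin S_inv S_inv])
    fix y :: "'a vec4"
    show "(dot (- (0^3), 3*0^2, -3*0, 1) (S y) = 0) = (dot (1,0,0,0) y = 0)"
      by (cases y rule: prod_cases4) simp
  qed
  then show ?thesis unfolding osc_plane_def osc_inf_def using True by simp
next
  case False
  have "lim S (plane_of (- (u^3), 3*u^2, -3*u, 1)) = plane_of (- ((1/u)^3), 3*(1/u)^2, -3*(1/u), 1)"
  proof (rule plane_img2[OF gact_lin gact_lin S_inv S_inv])
    fix y :: "'a vec4"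
    obtain y0 y1 y2 y3 where y: "y = (y0,y1,y2,y3)" by (cases y rule: prod_cases4)
    have "dot (- (u ^ 3), 3 * u\<^sup>2, - 3 * u, 1) (S y) = (- (u^3)) * dot (- ((1/u) ^ 3), 3 * (1/u)\<^sup>2, - 3 * (1/u), 1) y"
      unfolding y using False by (simp add: power2_eq_square power3_eq_cube field_simps)
    then show "(dot (- (u ^ 3), 3 * u\<^sup>2, - 3 * u, 1) (S y) = 0) = (dot (- ((1/u) ^ 3), 3 * (1/u)\<^sup>2, - 3 * (1/u), 1) y = 0)"
      using False by simp
  qed
  then show ?thesis unfolding osc_plane_def using False by simp
qed

lemma S_osc_inf: "lim S osc_inf = osc_plane 0"
  unfolding osc_plane_def osc_inf_def
proof (intro plane_img2[OF gact_lin gact_lin S_inv S_inv])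
  fix y :: "'a vec4"
  show "(dot (1,0,0,0) (S y) = 0) = (dot (- (0 ^ 3), 3 * 0\<^sup>2, - 3 * 0, 1) y = 0)"
    by (cases y rule: prod_cases4) simp
qed

lemma S_tan: "lim S (line_of (1,u,u^2,u^3) (0,1,2*u,3*u^2)) =
   (if u = 0 then line_of (0,0,0,1) (0,0,1,0) else line_of (1,1/u,(1/u)^2,(1/u)^3) (0,1,2*(1/u),3*(1/u)^2))"
proof (cases "u = 0")
  case True then show ?thesis by (simp add: lim_line gact_lin)
next
  case False
  have "lim S (line_of (1,u,u^2,u^3) (0,1,2*u,3*u^2)) = line_of (u^3,u^2,u,1) (3*u^2,2*u,1,0)"
    by (simp add: lim_line gact_lin)
  also have "\<dots> = line_of (1,1/u,(1/u)^2,(1/u)^3) (0,1,2*(1/u),3*(1/u)^2)"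
  proof (rule span_change[of _ "u^3" _ 0 _ _ "3*u^2" "-u"])
    show "(u ^ 3, u\<^sup>2, u, 1) = vadd (sm (u ^ 3) (1, 1 / u, (1 / u)\<^sup>2, (1 / u) ^ 3)) (sm 0 (0, 1, 2 * (1 / u), 3 * (1 / u)\<^sup>2))"
      using False by (simp add: power2_eq_square power3_eq_cube field_simps)
    show "(3 * u\<^sup>2, 2 * u, 1, 0) = vadd (sm (3 * u\<^sup>2) (1, 1 / u, (1 / u)\<^sup>2, (1 / u) ^ 3)) (sm (- u) (0, 1, 2 * (1 / u), 3 * (1 / u)\<^sup>2))"
      using False by (simp add: power2_eq_square power3_eq_cube field_simps)
    show "u ^ 3 * - u - 0 * (3 * u\<^sup>2) \<noteq> 0" using False by simp
  qed
  finally show ?thesis using False by simp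
qed

lemma S_tan_inf: "lim S (line_of (0,0,0,1) (0,0,1,0)) = line_of (1,0,0^2,0^3) (0,1,2*0,3*(0::'a::field)^2)"
  by (simp add: lim_line gact_lin)

lemma good_S: "good S S"
proof -
  have tc: "pim S ` TC \<subseteq> TC"
  proof
    fix x assume "x \<in> pim S ` TC"
    then consider u where "x = pim S (cubic_pt u)" | "x = pim S cubic_inf"
      unfolding TC_def by blast
    then show "x \<in> TC" by cases (auto simp only: S_cubic S_inf TC_def Un_iff rangeI insertI1 split: if_splits)
  qed
  have osc: "lim S ` Osc \<subseteq> Osc"
  proof
    fix x assume "x \<in> lim S ` Osc"
    then consider u where "x = lim S (osc_plane u)" | "x = lim S osc_inf"
      unfolding Osc_def by blast
    then show "x \<in> Osc" by cases (auto simp only: S_osc S_osc_inf Osc_def Un_iff rangeI insertI1 split: if_splits)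
  qed
  have tan: "lim S ` Tan \<subseteq> Tan"
  proof
    fix x assume "x \<in> lim S ` Tan"
    then consider u where "x = lim S (line_of (1,u,u^2,u^3) (0,1,2*u,3*u^2))" | "x = lim S (line_of (0,0,0,1) (0,0,1,0))"
      unfolding Tan_def by blast
    then show "x \<in> Tan"
    proof cases
      case 1 show ?thesis
      proof (cases "u = 0")
        case True then show ?thesis unfolding Tan_def 1 S_tan by simp
      next
        case False show ?thesis unfolding Tan_def 1 S_tan
          by (simp only: False if_False simp_thms, rule UnI1, rule range_eqI[where x="1/u"], simp)
      qed
    next
      case 2 show ?thesis unfolding Tan_def 2 S_tan_inf
        by (rule UnI1, rule range_eqI[where x=0], simp)
    qed
  qed
  show ?thesis unfolding good_def
    by (intro conjI gact_lin tc osc tan allI S_inv)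
qed

definition Linf :: "'a::field \<Rightarrow> 'a vec4 set set" where
  "Linf s = line_of (0,0,0,1) (0,1,s,0)"

lemma indep_Linf: "indep (0,0,0,1) (0,1,s,0)"
  unfolding indep_def by (simp add: zero4_def)

lemma Linf_param: "Linf s = insert cubic_inf (range (\<lambda>l. proj_pt (0,1,s,l)))"
  unfolding Linf_def line_param[OF indep_Linf] cubic_inf_def by simp

lemma card_Linf_inter:
  fixes K :: "'a::{field,finite} vec4 set set"
  shows "card (Linf s \<inter> K) = (if cubic_inf \<in> K then 1 else 0) + card {l. proj_pt (0,1,s,l) \<in> K}"
  unfolding Linf_def card_line_inter[OF indep_Linf] cubic_inf_def by simp

lemma X_notin_TC: "proj_pt (0,1,s,l) \<notin> TC"
proof
  assume "proj_pt (0,1,s,l) \<in> TC"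
  from TC_memD[OF this] show False by auto
qed

lemma X_points: "proj_pt (0,1,s,l) \<in> points"
  unfolding points_def by (rule CollectI, rule exI[of _ "(0,1,s,l)"]) (simp add: zero4_def)

lemma inf_P2: "cubic_inf \<notin> P2" "cubic_inf \<notin> P3" "cubic_inf \<notin> P4" "cubic_inf \<notin> P5" "cubic_inf \<in> P1"
  unfolding P1_def P2_def P3_def P4_def P5_def TC_def Osc_def by auto

lemma X_P1: "proj_pt (0,1,s,l) \<notin> P1" using X_notin_TC unfolding P1_def by blast

lemma twelve: assumes "(2::'a::field) \<noteq> 0" "(3::'a) \<noteq> 0" shows "(12::'a) \<noteq> 0"
proof -
  have e: "(12::'a) = 2*(2*3)" by simp
  show ?thesis unfolding e mult_eq_0_iff using assms by blast
qed

lemma four: assumes "(2::'a::field) \<noteq> 0" shows "(4::'a) \<noteq> 0"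
proof -
  have e: "(4::'a) = 2*2" by simp
  show ?thesis unfolding e mult_eq_0_iff using assms by blast
qed

lemma X_P2:
  fixes s l :: "'a::field"
  assumes two: "(2::'a) \<noteq> 0" and three: "(3::'a) \<noteq> 0"
  shows "proj_pt (0,1,s,l) \<in> P2 \<longleftrightarrow> 9*s^2 + (-12)*l = 0"
proof
  assume "proj_pt (0,1,s,l) \<in> P2"
  then obtain m where m: "m \<in> Tan" "proj_pt (0,1,s,l) \<in> m" unfolding P2_def by blast
  then consider u where "m = line_of (1,u,u^2,u^3) (0,1,2*u,3*u^2)" | "m = line_of (0,0,0,1) (0,0,1,0)"
    unfolding Tan_def by blast
  then show "9*s^2 + (-12)*l = 0"
  proof cases
    case 1
    then obtain a b where "(0,1,s,l) = vadd (sm a (1,u,u^2,u^3)) (sm b (0,1,2*u,3*u^2))"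
      using m mem_lineD by metis
    then have "a = 0" "b = 1" "s = 2*u" "l = 3*u^2" by auto
    then show ?thesis by (simp add: power2_eq_square algebra_simps)
  next
    case 2
    then obtain a b where "(0,1,s,l) = vadd (sm a (0,0,0,1)) (sm b (0,0,1,0))"
      using m mem_lineD by metis
    then show ?thesis by simp
  qed
next
  assume d: "9*s^2 + (-12)*l = 0"
  define u where "u = s/2"
  have "s = 2*u" using two unfolding u_def by simp
  moreover have "l = 3*u^2"
  proof -
    have "9*s^2 = 12*(3*u^2)" using \<open>s = 2*u\<close> by (simp add: power2_eq_square algebra_simps)
    moreover have "12*l = 9*s^2" using d by algebra
    ultimately have "12 * l = 12 * (3*u^2)" by simp
    then show ?thesis using twelve[OF two three] mult_left_cancel by blast
  qed
  ultimately have "(0,1,s,l) = vadd (sm 0 (1,u,u^2,u^3)) (sm 1 (0,1,2*u,3*u^2))" by simp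
  then have "proj_pt (0,1,s,l) \<in> line_of (1,u,u^2,u^3) (0,1,2*u,3*u^2)"
    using mem_lineI[of 0 1 "(1,u,u^2,u^3)" "(0,1,2*u,3*u^2)"] by simp
  moreover have "line_of (1,u,u^2,u^3) (0,1,2*u,3*u^2) \<in> Tan" unfolding Tan_def by blast
  ultimately show "proj_pt (0,1,s,l) \<in> P2" unfolding P2_def using X_points X_notin_TC by blast
qed

lemma X_osc_count:
  fixes s l :: "'a::{field,finite}"
  assumes two: "(2::'a) \<noteq> 0" and three: "(3::'a) \<noteq> 0"
  shows "card {\<pi> \<in> Osc. proj_pt (0,1,s,l) \<in> \<pi>} = 1 + card {y. y^2 = 9*s^2 + (-12)*l}"
proof -
  have "proj_pt (0,1,s,l) \<in> osc_inf" unfolding mem_osc_inf by (simp add: zero4_def)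
  moreover have "{u. proj_pt (0,1,s,l) \<in> osc_plane u} = {u. 3*u^2 + (-3*s)*u + l = 0}"
    unfolding mem_osc by (simp add: zero4_def algebra_simps)
  moreover have "card {u. 3*u^2 + (-3*s)*u + l = 0} = card {y. y^2 = (-3*s)^2 - 4*3*l}"
    by (rule card_quad[OF two three])
  moreover have "(-3*s)^2 - 4*3*l = 9*s^2 + (-12)*l" by (simp add: power2_eq_square algebra_simps)
  ultimately show ?thesis unfolding card_osc_through by simp
qed

lemma X_classes:
  fixes s l :: "'a::{field,finite}"
  assumes two: "(2::'a) \<noteq> 0" and three: "(3::'a) \<noteq> 0"
  shows "proj_pt (0,1,s,l) \<in> P3 \<longleftrightarrow> nzsq (9*s^2 + (-12)*l)"
    and "proj_pt (0,1,s,l) \<in> P4 \<longleftrightarrow> nsq (9*s^2 + (-12)*l)"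
    and "proj_pt (0,1,s,l) \<notin> P5"
proof -
  let ?d = "9*s^2 + (-12)*l"
  have c: "card {\<pi> \<in> Osc. proj_pt (0,1,s,l) \<in> \<pi>} = 1 + (if ?d = 0 then 1 else if nzsq ?d then 2 else 0)"
    using X_osc_count[OF two three] card_sqrt[OF two] by simp
  have n: "nsq ?d \<longleftrightarrow> ?d \<noteq> 0 \<and> \<not> nzsq ?d" unfolding nsq_def nzsq_def
    by (metis power_zero_numeral)
  show "proj_pt (0,1,s,l) \<in> P3 \<longleftrightarrow> nzsq ?d"
    unfolding P3_def using c X_points X_notin_TC by (auto simp: nzsq_def)
  show "proj_pt (0,1,s,l) \<in> P4 \<longleftrightarrow> nsq ?d"
    unfolding P4_def using c X_points X_notin_TC n by auto
  have "proj_pt (0,1,s,l) \<in> osc_inf" unfolding mem_osc_inf by (simp add: zero4_def)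
  then show "proj_pt (0,1,s,l) \<notin> P5"
    unfolding P5_def Osc_def by blast
qed

lemma OD0_Linf:
  fixes s :: "'a::{field,finite}"
  assumes two: "(2::'a) \<noteq> 0" and three: "(3::'a) \<noteq> 0"
  shows "OD0 (Linf s) = [1, 1, (card (UNIV :: 'a set) - 1) div 2, (card (UNIV :: 'a set) - 1) div 2, 0]"
proof -
  have t: "(-12::'a) \<noteq> 0" using twelve[OF two three] by simp
  have "{l. proj_pt (0,1,s,l) \<in> P1} = {}" using X_P1 by blast
  then have 1: "card (Linf s \<inter> P1) = 1" unfolding card_Linf_inter using inf_P2 by simp
  have 2: "card (Linf s \<inter> P2) = 1" unfolding card_Linf_inter
    using inf_P2 X_P2[OF two three] card_affine[OF t, of "\<lambda>y. y = 0" "9*s^2"] by simp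
  have 3: "card (Linf s \<inter> P3) = (card (UNIV :: 'a set) - 1) div 2" unfolding card_Linf_inter
    using inf_P2 X_classes[OF two three] card_affine[OF t, of nzsq "9*s^2"] card_nzsq_half[OF two] by simp
  have 4: "card (Linf s \<inter> P4) = (card (UNIV :: 'a set) - 1) div 2" unfolding card_Linf_inter
    using inf_P2 X_classes[OF two three] card_affine[OF t, of nsq "9*s^2"] card_nsq_half[OF two] by simp
  have "{l. proj_pt (0,1,s,l) \<in> P5} = {}" using X_classes(3)[OF two three] by blast
  then have 5: "card (Linf s \<inter> P5) = 0" unfolding card_Linf_inter
    using inf_P2 by simp
  show ?thesis unfolding OD0_def using 1 2 3 4 5 by simp
qed

lemma dot_sm_left: "dot (sm c h) v = c * dot h v"
  by (cases v rule: prod_cases4; cases h rule: prod_cases4) (simp add: algebra_simps)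

lemma plane_sm: "c \<noteq> 0 \<Longrightarrow> plane_of (sm c h) = plane_of h"
  unfolding plane_of_def by (simp add: dot_sm_left)

lemma line_sub_plane:
  assumes ind: "indep u w" and hu: "dot h u = 0" and hw: "dot h w = 0"
  shows "line_of u w \<subseteq> plane_of h"
proof
  fix P assume "P \<in> line_of u w"
  then obtain a b where ab: "a \<noteq> 0 \<or> b \<noteq> 0" "P = proj_pt (vadd (sm a u) (sm b w))" by (metis line_elem)
  have "vadd (sm a u) (sm b w) \<noteq> zero4" using ind ab(1) unfolding indep_def by blast
  moreover have "dot h (vadd (sm a u) (sm b w)) = 0" using hu hw by simp
  ultimately show "P \<in> plane_of h" using ab(2) mem_plane by blast
qed

definition Pi :: "'a::field \<Rightarrow> 'a \<Rightarrow> 'a vec4 set set" where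
  "Pi s m = plane_of (m, -s, 1, 0)"

lemma osc_inf_alt: "osc_inf = plane_of (1,0,0,0)" unfolding osc_inf_def ..

lemma planes_thru_Linf:
  assumes p: "\<pi> \<in> planes"
  shows "Linf s \<subseteq> \<pi> \<longleftrightarrow> \<pi> = osc_inf \<or> (\<exists>m. \<pi> = Pi s m)"
proof
  assume sub: "Linf s \<subseteq> \<pi>"
  obtain h where h: "\<pi> = plane_of h" "h \<noteq> zero4" using p unfolding planes_def by blast
  obtain h0 h1 h2 h3 where hh: "h = (h0,h1,h2,h3)" by (cases h rule: prod_cases4)
  have "proj_pt (0,0,0,1) \<in> \<pi>" "proj_pt (0,1,s,0) \<in> \<pi>"
    using sub mem_lineI1 mem_lineI2 unfolding Linf_def by blast+
  then have e: "h3 = 0" "h1 + h2 * s = 0" unfolding h mem_plane hh by simp_all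
  show "\<pi> = osc_inf \<or> (\<exists>m. \<pi> = Pi s m)"
  proof (cases "h2 = 0")
    case True
    then have "h1 = 0" using e by simp
    then have "h0 \<noteq> 0" "h = sm h0 (1,0,0,0)" using h(2) True e unfolding hh zero4_def by auto
    then have "\<pi> = osc_inf" unfolding h osc_inf_def using plane_sm by metis
    then show ?thesis by blast
  next
    case False
    have "h1 = -s * h2" using e by algebra
    then have "h = sm h2 (h0/h2, -s, 1, 0)" using False e(1) unfolding hh by simp
    then have "\<pi> = Pi s (h0/h2)" unfolding h Pi_def using plane_sm False by metis
    then show ?thesis by blast
  qed
next
  assume "\<pi> = osc_inf \<or> (\<exists>m. \<pi> = Pi s m)"
  then show "Linf s \<subseteq> \<pi>"
  proof
    assume "\<pi> = osc_inf"
    then show ?thesis unfolding Linf_def osc_inf_def using line_sub_plane[OF indep_Linf, of "(1,0,0,0)"] by simp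
  next
    assume "\<exists>m. \<pi> = Pi s m"
    then obtain m where "\<pi> = Pi s m" by blast
    then show ?thesis unfolding Linf_def Pi_def using line_sub_plane[OF indep_Linf, of "(m,-s,1,0)"] by simp
  qed
qed

lemma Pi_planes: "Pi s m \<in> planes"
  unfolding Pi_def planes_def by (rule CollectI, rule exI[of _ "(m, -s, 1, 0)"]) (simp add: zero4_def)

lemma osc_inf_planes: "osc_inf \<in> planes"
  unfolding osc_inf_def planes_def by (rule CollectI, rule exI[of _ "(1,0,0,0)"]) (simp add: zero4_def)

lemma Osc_planes: "Osc \<subseteq> planes"
proof
  fix x assume "x \<in> Osc"
  then consider u where "x = osc_plane u" | "x = osc_inf" unfolding Osc_def by blast
  then show "x \<in> planes"
  proof cases
    case 1 then show ?thesis unfolding osc_plane_def planes_def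
      by (intro CollectI exI[of _ "(- (u^3), 3 * u^2, - 3 * u, 1)"]) (simp add: zero4_def)
  qed (simp add: osc_inf_planes)
qed

lemma Pi_inj: "Pi s m = Pi s m' \<Longrightarrow> m = m'"
proof -
  assume e: "Pi s m = Pi s m'"
  have "proj_pt (1,0,-m,0) \<in> Pi s m" unfolding Pi_def mem_plane by (simp add: zero4_def)
  then have "proj_pt (1,0,-m,0) \<in> Pi s m'" using e by simp
  then show "m = m'" unfolding Pi_def mem_plane by simp
qed

lemma inf_in_Pi: "cubic_inf \<in> Pi s m"
  unfolding Pi_def cubic_inf_def mem_plane by (simp add: zero4_def)

lemma Pi_notOsc: "Pi s m \<notin> Osc"
proof
  assume "Pi s m \<in> Osc"
  then consider u where "Pi s m = osc_plane u" | "Pi s m = osc_inf" unfolding Osc_def by blast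
  then show False
  proof cases
    case 1 then show False using inf_in_Pi inf_notin_osc by metis
  next
    case 2
    have "proj_pt (1,0,-m,0) \<in> Pi s m" unfolding Pi_def mem_plane by (simp add: zero4_def)
    moreover have "proj_pt (1,0,-m,0) \<notin> osc_inf" unfolding mem_osc_inf by simp
    ultimately show False using 2 by simp
  qed
qed

lemma card_osc_inf_TC: "card (osc_inf \<inter> (TC :: 'a::{field,finite} vec4 set set)) = 1"
  unfolding card_TC_inter by simp

lemma card_Pi_TC:
  fixes s m :: "'a::{field,finite}"
  assumes two: "(2::'a) \<noteq> 0"
  shows "card (Pi s m \<inter> TC) = 1 + (if s^2 + (-4)*m = 0 then 1 else if nzsq (s^2 + (-4)*m) then 2 else 0)"
proof -
  have "{u. cubic_pt u \<in> Pi s m} = {u. 1*u^2 + (-s)*u + m = 0}"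
    unfolding Pi_def cubic_pt_def mem_plane by (simp add: zero4_def algebra_simps)
  moreover have "card {u. 1*u^2 + (-s)*u + m = 0} = card {y. y^2 = (-s)^2 - 4*1*m}"
    by (rule card_quad[OF two]) simp
  moreover have "(-s)^2 - 4*1*m = s^2 + (-4)*m" by simp
  ultimately show ?thesis unfolding card_TC_inter using inf_in_Pi card_sqrt[OF two] by simp
qed

lemma thru_Linf_K:
  assumes K: "K \<subseteq> planes" "osc_inf \<notin> K"
  shows "card {\<pi> \<in> K. Linf s \<subseteq> \<pi>} = card {m. Pi s m \<in> K}"
proof -
  have "{\<pi> \<in> K. Linf s \<subseteq> \<pi>} = Pi s ` {m. Pi s m \<in> K}"
  proof (intro set_eqI iffI)
    fix \<pi> assume "\<pi> \<in> {\<pi> \<in> K. Linf s \<subseteq> \<pi>}"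
    then have p: "\<pi> \<in> K" "Linf s \<subseteq> \<pi>" by auto
    then have "\<pi> = osc_inf \<or> (\<exists>m. \<pi> = Pi s m)" using planes_thru_Linf[OF subsetD[OF K(1) p(1)]] by blast
    then obtain m where "\<pi> = Pi s m" using p(1) K(2) by blast
    then show "\<pi> \<in> Pi s ` {m. Pi s m \<in> K}" using p(1) by blast
  next
    fix \<pi> assume "\<pi> \<in> Pi s ` {m. Pi s m \<in> K}"
    then obtain m where m: "\<pi> = Pi s m" "Pi s m \<in> K" by blast
    then have "Linf s \<subseteq> \<pi>" using planes_thru_Linf[OF Pi_planes] by blast
    then show "\<pi> \<in> {\<pi> \<in> K. Linf s \<subseteq> \<pi>}" using m by blast
  qed
  moreover have "inj (Pi s)" by (meson injI Pi_inj)
  ultimately show ?thesis by (simp add: card_image inj_on_subset)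
qed

lemma osc_inf_Osc: "osc_inf \<in> Osc" unfolding Osc_def by blast

lemma OD2_Linf:
  fixes s :: "'a::{field,finite}"
  assumes two: "(2::'a) \<noteq> 0" and three: "(3::'a) \<noteq> 0"
  shows "OD2 (Linf s) = [1, 1, (card (UNIV :: 'a set) - 1) div 2, (card (UNIV :: 'a set) - 1) div 2, 0]"
proof -
  have f: "(-4::'a) \<noteq> 0" using four[OF two] by simp
  let ?e = "\<lambda>m. s^2 + (-4)*m"
  have c: "\<And>m. card (Pi s m \<inter> TC) = 1 + (if ?e m = 0 then 1 else if nzsq (?e m) then 2 else 0)"
    using card_Pi_TC[OF two] by blast
  have n: "\<And>d::'a. nsq d \<longleftrightarrow> d \<noteq> 0 \<and> \<not> nzsq d" unfolding nsq_def nzsq_def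
    by (metis power_zero_numeral)
  have 1: "card {\<pi> \<in> H1. Linf s \<subseteq> \<pi>} = 1"
  proof -
    have "{\<pi> \<in> H1. Linf s \<subseteq> \<pi>} = {osc_inf}"
    proof (intro set_eqI iffI)
      fix \<pi> assume "\<pi> \<in> {\<pi> \<in> H1. Linf s \<subseteq> \<pi>}"
      then have p: "\<pi> \<in> Osc" "Linf s \<subseteq> \<pi>" unfolding H1_def by auto
      then have "\<pi> = osc_inf \<or> (\<exists>m. \<pi> = Pi s m)" using planes_thru_Linf[OF subsetD[OF Osc_planes p(1)]] by blast
      then show "\<pi> \<in> {osc_inf}" using p(1) Pi_notOsc by blast
    next
      fix \<pi> :: "'a vec4 set set" assume "\<pi> \<in> {osc_inf}"
      then show "\<pi> \<in> {\<pi> \<in> H1. Linf s \<subseteq> \<pi>}" unfolding H1_def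
        using osc_inf_Osc planes_thru_Linf[OF osc_inf_planes] by blast
    qed
    then show ?thesis by simp
  qed
  have o1: "card (osc_inf \<inter> (TC::'a vec4 set set)) = 1" by (rule card_osc_inf_TC)
  have "cubic_inf \<in> osc_inf \<inter> (TC::'a vec4 set set)" by (simp add: TC_def)
  then have o2: "osc_inf \<inter> (TC::'a vec4 set set) \<noteq> {}" by blast
  have "(osc_inf::'a vec4 set set) \<notin> H2" "(osc_inf::'a vec4 set set) \<notin> H3"
    "(osc_inf::'a vec4 set set) \<notin> H4" "(osc_inf::'a vec4 set set) \<notin> H5"
    unfolding H2_def H3_def H4_def H5_def using o1 o2 osc_inf_Osc by auto
  moreover have "(H2::'a vec4 set set set) \<subseteq> planes" "(H3::'a vec4 set set set) \<subseteq> planes"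
    "(H4::'a vec4 set set set) \<subseteq> planes" "(H5::'a vec4 set set set) \<subseteq> planes"
    unfolding H2_def H3_def H4_def H5_def by auto
  ultimately have k: "card {\<pi> \<in> H2. Linf s \<subseteq> \<pi>} = card {m. Pi s m \<in> H2}"
      "card {\<pi> \<in> H3. Linf s \<subseteq> \<pi>} = card {m. Pi s m \<in> H3}"
      "card {\<pi> \<in> H4. Linf s \<subseteq> \<pi>} = card {m. Pi s m \<in> H4}"
      "card {\<pi> \<in> H5. Linf s \<subseteq> \<pi>} = card {m. Pi s m \<in> H5}"
    using thru_Linf_K by blast+
  have "{m. Pi s m \<in> H2} = {m. ?e m = 0}" unfolding H2_def using Pi_planes[of s] c by auto
  then have 2: "card {\<pi> \<in> H2. Linf s \<subseteq> \<pi>} = 1"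
    using k card_affine[OF f, of "\<lambda>y. y = 0" "s^2"] by simp
  have "{m. Pi s m \<in> H3} = {m. nzsq (?e m)}" unfolding H3_def using Pi_planes[of s] c by (auto simp: nzsq_def)
  then have 3: "card {\<pi> \<in> H3. Linf s \<subseteq> \<pi>} = (card (UNIV :: 'a set) - 1) div 2"
    using k card_affine[OF f, of nzsq "s^2"] card_nzsq_half[OF two] by simp
  have "{m. Pi s m \<in> H4} = {m. nsq (?e m)}" unfolding H4_def using Pi_planes[of s] c Pi_notOsc[of s] n by auto
  then have 4: "card {\<pi> \<in> H4. Linf s \<subseteq> \<pi>} = (card (UNIV :: 'a set) - 1) div 2"
    using k card_affine[OF f, of nsq "s^2"] card_nsq_half[OF two] by simp
  have "{m. Pi s m \<in> H5} = {}" unfolding H5_def using inf_in_Pi by (auto simp: TC_def)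
  then have 5: "card {\<pi> \<in> H5. Linf s \<subseteq> \<pi>} = 0" using k by simp
  show ?thesis unfolding OD2_def using 1 2 3 4 5 by simp
qed

lemma Linf_L3: "(Linf s :: 'a::{field,finite} vec4 set set) \<in> L3"
proof -
  have "Linf s \<in> lines" unfolding Linf_def lines_def using indep_Linf by blast
  moreover have "{l. proj_pt (0,1,s,l) \<in> TC} = {}" using X_notin_TC by blast
  then have "card (Linf s \<inter> TC) = 1" unfolding card_Linf_inter by (simp add: TC_def)
  moreover have "Linf s \<subseteq> osc_inf" using planes_thru_Linf osc_inf_planes by blast
  then have "\<exists>\<pi>\<in>Osc. Linf s \<subseteq> \<pi>" unfolding Osc_def by blast
  moreover have "Linf s \<notin> Tan"
  proof
    assume "Linf s \<in> Tan"
    then consider u where "Linf s = line_of (1,u,u^2,u^3) (0,1,2*u,3*u^2)" | "Linf s = line_of (0,0,0,1) (0,0,1,0)"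
      unfolding Tan_def by blast
    then show False
    proof cases
      case 1
      then have "cubic_pt u \<in> Linf s" unfolding cubic_pt_def using mem_lineI1 by metis
      then show False unfolding Linf_param using X_notin_TC[of s] by (auto simp: TC_def)
    next
      case 2
      then have "proj_pt (0,1,s,0) \<in> line_of (0,0,0,1) (0,0,1,0)" unfolding Linf_def using mem_lineI2 by metis
      then obtain a b where "(0,1,s,0) = vadd (sm a (0,0,0,1)) (sm b (0,0,1,0))" using mem_lineD by metis
      then show False by simp
    qed
  qed
  ultimately show ?thesis unfolding L3_def by blast
qed

lemma classify_inf:
  fixes l :: "'a::{field,finite} vec4 set set"
  assumes l: "l \<in> L3" and inf: "cubic_inf \<in> l"
  shows "\<exists>s. l = Linf s"
proof -
  obtain u w where uw: "l = line_of u w" "indep u w" using l unfolding L3_def lines_def by blast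
  obtain \<pi> where \<pi>: "\<pi> \<in> Osc" "l \<subseteq> \<pi>" using l unfolding L3_def by blast
  have "\<pi> = osc_inf"
  proof -
    have "cubic_inf \<in> \<pi>" using inf \<pi> by blast
    then show ?thesis using \<pi>(1) inf_notin_osc unfolding Osc_def by blast
  qed
  then have sub: "l \<subseteq> osc_inf" using \<pi> by simp
  have "proj_pt (0,0,0,1) \<in> line_of u w" using inf uw unfolding cubic_inf_def by simp
  then obtain \<alpha> \<beta> where ab: "(0,0,0,1) = vadd (sm \<alpha> u) (sm \<beta> w)" using mem_lineD by metis
  obtain x where x: "l = line_of (0,0,0,1) x" "indep (0,0,0,1) x"
  proof (cases "\<beta> = 0")
    case False
    have u: "u = vadd (sm 1 u) (sm 0 w)" by simp
    have d: "\<alpha> * 0 - \<beta> * 1 \<noteq> 0" using False by simp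
    show ?thesis using that[of u] span_change[OF ab u d] span_change_indep[OF uw(2) ab u d] uw(1) by simp
  next
    case True
    then have "\<alpha> \<noteq> 0" using ab by (cases u rule: prod_cases4; cases w rule: prod_cases4) auto
    have w: "w = vadd (sm 0 u) (sm 1 w)" by simp
    have d: "\<alpha> * 1 - \<beta> * 0 \<noteq> 0" using \<open>\<alpha> \<noteq> 0\<close> by simp
    show ?thesis using that[of w] span_change[OF ab w d] span_change_indep[OF uw(2) ab w d] uw(1) by simp
  qed
  obtain x0 x1 x2 x3 where xx: "x = (x0,x1,x2,x3)" by (cases x rule: prod_cases4)
  have "proj_pt x \<in> osc_inf" using sub x(1) mem_lineI2 by blast
  then have x0: "x0 = 0" unfolding mem_osc_inf xx by simp
  show ?thesis
  proof (cases "x1 = 0")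
    case False
    have e1: "(0::'a,0::'a,0::'a,1::'a) = vadd (sm 1 (0,0,0,1)) (sm 0 x)" by simp
    have e2: "(0,1,x2/x1,0) = vadd (sm (-x3/x1) (0,0,0,1)) (sm (1/x1) x)"
      unfolding xx x0 using False by simp
    have d: "1 * (1/x1) - 0 * (-x3/x1) \<noteq> 0" using False by simp
    have "Linf (x2/x1) = l" unfolding Linf_def x(1) by (rule span_change[OF e1 e2 d])
    then show ?thesis by metis
  next
    case True
    have "x2 \<noteq> 0"
    proof
      assume "x2 = 0"
      then have "vadd (sm x3 (0,0,0,1)) (sm (-1) x) = zero4" unfolding xx x0 True by (simp add: zero4_def)
      then show False using x(2) unfolding indep_def by fastforce
    qed
    have e1: "(0::'a,0::'a,0::'a,1::'a) = vadd (sm 1 (0,0,0,1)) (sm 0 x)" by simp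
    have e2: "(0,0,1,0) = vadd (sm (-x3/x2) (0,0,0,1)) (sm (1/x2) x)"
      unfolding xx x0 True using \<open>x2 \<noteq> 0\<close> by simp
    have d: "1 * (1/x2) - 0 * (-x3/x2) \<noteq> 0" using \<open>x2 \<noteq> 0\<close> by simp
    have "line_of (0,0,0,1) (0,0,1,0) = l" unfolding x(1) by (rule span_change[OF e1 e2 d])
    then have "l \<in> Tan" unfolding Tan_def by blast
    then show ?thesis using l unfolding L3_def by blast
  qed
qed

lemma reduce:
  fixes l :: "'a::{field,finite} vec4 set set"
  assumes l: "l \<in> L3"
  shows "\<exists>s. l = Linf s \<or> (\<exists>t. l = lim (T t) (lim S (Linf s)))"
proof -
  have "card (l \<inter> TC) = 1" using l unfolding L3_def by blast
  then obtain Q where Q: "l \<inter> TC = {Q}" by (meson card_1_singletonE)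
  then have "Q \<in> TC" "Q \<in> l" by auto
  then consider "Q = cubic_inf" | t where "Q = cubic_pt t" unfolding TC_def by blast
  then show ?thesis
  proof cases
    case 1 then show ?thesis using classify_inf[OF l] \<open>Q \<in> l\<close> by blast
  next
    case 2
    have g1: "good (T (-t)) (T t)" using good_T[of "-t"] by simp
    define l1 where "l1 = lim (T (-t)) l"
    have l1: "l1 \<in> L3" unfolding l1_def by (rule L3_img[OF g1 l])
    have "pim (T (-t)) Q \<in> l1" unfolding l1_def using pim_mem_iff[OF g1] \<open>Q \<in> l\<close> by blast
    moreover have "pim (T (-t)) Q = cubic_pt 0" using 2 T_cubic[of "-t" t] by simp
    ultimately have "cubic_pt 0 \<in> l1" by simp
    define l2 where "l2 = lim S l1"
    have l2: "l2 \<in> L3" unfolding l2_def by (rule L3_img[OF good_S l1])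
    have "pim S (cubic_pt 0) \<in> l2" unfolding l2_def using pim_mem_iff[OF good_S] \<open>cubic_pt 0 \<in> l1\<close> by blast
    then have "cubic_inf \<in> l2" using S_cubic[of "0::'a"] by simp
    then obtain s where s: "l2 = Linf s" using classify_inf[OF l2] by blast
    have "l1 = lim S (Linf s)" using lim_lim[OF good_S, of l1] s unfolding l2_def by simp
    moreover have "l = lim (T t) l1" using lim_lim[OF g1, of l] unfolding l1_def by simp
    ultimately show ?thesis by blast
  qed
qed

lemma lim_comp: "lim f (lim g l) = lim (\<lambda>v. f (g v)) l"
  unfolding lim_def pim_def by (simp add: image_image)

lemma lim_B:
  fixes s :: "'a::field"
  assumes two: "(2::'a) \<noteq> 0"
  shows "lim (gact 1 (s/2) 0 1) (Linf 0) = Linf s"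
proof -
  have "lim (gact 1 (s/2) 0 1) (Linf 0) = line_of (0,0,0,1) (0,1,s,3*(s/2)^2)"
    unfolding Linf_def lim_line[OF gact_lin] using two by simp
  also have "\<dots> = Linf s"
  proof -
    have e1: "(0::'a,0::'a,0::'a,1::'a) = vadd (sm 1 (0,0,0,1)) (sm 0 (0,1,s,3*(s/2)^2))" by simp
    have e2: "(0,1,s,0) = vadd (sm (-(3*(s/2)^2)) (0,0,0,1)) (sm 1 (0,1,s,3*(s/2)^2))" by simp
    have d: "1 * 1 - 0 * (-(3*(s/2)^2)) \<noteq> (0::'a)" by simp
    show ?thesis unfolding Linf_def using span_change[OF e1 e2 d] by simp
  qed
  finally show ?thesis .
qed

lemma B_case:
  fixes a b d :: "'a::{field,finite}"
  assumes a: "a \<noteq> 0" and d: "d \<noteq> 0"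
  shows "lim (gact a b 0 d) (Linf 0) \<in> L3"
proof -
  have "lim (gact a b 0 d) (Linf 0) = line_of (0,0,0,d^3) (0, a^2*d, 2*a*b*d, 3*b^2*d)"
    unfolding Linf_def lim_line[OF gact_lin] by (simp add: algebra_simps)
  also have "\<dots> = Linf (2*b/a)"
  proof -
    have e1: "(0::'a, 0::'a, 0::'a, 1::'a) = vadd (sm (1 / d ^ 3) (0, 0, 0, d ^ 3)) (sm 0 (0, a\<^sup>2 * d, 2 * a * b * d, 3 * b\<^sup>2 * d))"
      using d by simp
    have e2: "(0, 1, 2 * b / a, 0) = vadd (sm (- 3 * b\<^sup>2 / (a\<^sup>2 * d ^ 3)) (0, 0, 0, d ^ 3)) (sm (1 / (a\<^sup>2 * d)) (0, a\<^sup>2 * d, 2 * a * b * d, 3 * b\<^sup>2 * d))"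
      using a d by (simp add: field_simps power2_eq_square power3_eq_cube)
    have dd: "1 / d ^ 3 * (1 / (a\<^sup>2 * d)) - 0 * (- 3 * b\<^sup>2 / (a\<^sup>2 * d ^ 3)) \<noteq> 0" using a d by simp
    show ?thesis unfolding Linf_def using span_change[OF e1 e2 dd] by simp
  qed
  finally show ?thesis using Linf_L3 by simp
qed

lemma lim_alt: "lim \<phi> l = (\<lambda>P. \<phi> ` P) ` l"
  unfolding lim_def pim_def ..

lemma orbit_elem: "g \<in> Gmaps \<Longrightarrow> \<exists>a b c d. a*d - b*c \<noteq> 0 \<and> g ` l0 = lim (gact a b c d) l0"
proof -
  assume "g \<in> Gmaps"
  then obtain a b c d where "g = (\<lambda>P. gact a b c d ` P)" "a*d - b*c \<noteq> 0" unfolding Gmaps_def by blast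
  then show ?thesis unfolding lim_alt by blast
qed

lemma mem_orbit: "a*d - b*c \<noteq> 0 \<Longrightarrow> lim (gact a b c d) l0 \<in> (\<lambda>g. g ` l0) ` Gmaps"
proof -
  assume "a*d - b*c \<noteq> 0"
  then have "(\<lambda>P. gact a b c d ` P) \<in> Gmaps" unfolding Gmaps_def by blast
  then show ?thesis unfolding lim_alt by (rule imageI)
qed

lemma decomp:
  fixes a b c d :: "'a::field"
  assumes c: "c \<noteq> 0"
  shows "gact a b c d v = T (d/c) (S (gact ((b*c - a*d)/c) a 0 c v))"
proof -
  have "T (d/c) (S (gact ((b*c - a*d)/c) a 0 c v)) = gact a (a*(d/c) + (b*c - a*d)/c) c (c*(d/c)) v"
    by (simp add: gact_comp)
  moreover have "a*(d/c) + (b*c - a*d)/c = b" using c by (simp add: field_simps)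
  moreover have "c*(d/c) = d" using c by simp
  ultimately show ?thesis by simp
qed

lemma compose:
  fixes s t :: "'a::field"
  shows "T t (S (gact 1 (s/2) 0 1 v)) = gact (s/2) (s/2*t + 1) 1 t v"
  by (simp add: gact_comp)

theorem mainTheorem3:
  assumes "(2::'a::{field,finite}) \<noteq> 0" and "(3::'a) \<noteq> 0"
  shows "(\<exists>l0. (L3 :: 'a vec4 set set set) = (\<lambda>g. g ` l0) ` Gmaps) \<and>
         (\<forall>l \<in> (L3 :: 'a vec4 set set set).
            OD2 l = [1, 1, (card (UNIV :: 'a set) - 1) div 2, (card (UNIV :: 'a set) - 1) div 2, 0] \<and>
            OD0 l = [1, 1, (card (UNIV :: 'a set) - 1) div 2, (card (UNIV :: 'a set) - 1) div 2, 0])"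
proof -
  note two = assms(1) and three = assms(2)
  let ?l0 = "Linf (0::'a)"
  have sub1: "L3 \<subseteq> (\<lambda>g. g ` ?l0) ` Gmaps"
  proof
    fix l :: "'a vec4 set set" assume l: "l \<in> L3"
    obtain s where s: "l = Linf s \<or> (\<exists>t. l = lim (T t) (lim S (Linf s)))" using reduce[OF l] by blast
    then show "l \<in> (\<lambda>g. g ` ?l0) ` Gmaps"
    proof
      assume "l = Linf s"
      then have "l = lim (gact 1 (s/2) 0 1) ?l0" using lim_B[OF two] by simp
      then show ?thesis using mem_orbit[of 1 1 "s/2" 0 ?l0] by simp
    next
      assume "\<exists>t. l = lim (T t) (lim S (Linf s))"
      then obtain t where t: "l = lim (T t) (lim S (Linf s))" by blast
      have "l = lim (T t) (lim S (lim (gact 1 (s/2) 0 1) ?l0))" using t lim_B[OF two] by simp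
      also have "\<dots> = lim (\<lambda>v. T t (S (gact 1 (s/2) 0 1 v))) ?l0" by (simp add: lim_comp)
      also have "\<dots> = lim (gact (s/2) (s/2*t + 1) 1 t) ?l0" by (simp add: compose)
      finally have e: "l = lim (gact (s/2) (s/2*t + 1) 1 t) ?l0" .
      have "s/2 * t - (s/2*t + 1) * 1 \<noteq> (0::'a)" by simp
      then show ?thesis using e mem_orbit by metis
    qed
  qed
  have sub2: "(\<lambda>g. g ` ?l0) ` Gmaps \<subseteq> L3"
  proof
    fix l assume "l \<in> (\<lambda>g. g ` ?l0) ` Gmaps"
    then obtain g where g: "g \<in> Gmaps" "l = g ` ?l0" by blast
    then obtain a b c d where abcd: "a*d - b*c \<noteq> 0" "l = lim (gact a b c d) ?l0"
      using orbit_elem by metis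
    show "l \<in> L3"
    proof (cases "c = 0")
      case True
      then have "a \<noteq> 0" "d \<noteq> 0" using abcd(1) by auto
      then show ?thesis using B_case abcd(2) True by simp
    next
      case False
      have "(b*c - a*d)/c \<noteq> 0" using abcd(1) False by (simp add: algebra_simps)
      then have in3: "lim (gact ((b*c - a*d)/c) a 0 c) ?l0 \<in> L3" using B_case False by blast
      have "gact a b c d = (\<lambda>v. T (d/c) (S (gact ((b*c - a*d)/c) a 0 c v)))"
        by (rule ext) (rule decomp[OF False])
      then have "l = lim (\<lambda>v. T (d/c) (S (gact ((b*c - a*d)/c) a 0 c v))) ?l0"
        using abcd(2) by simp
      also have "\<dots> = lim (T (d/c)) (lim S (lim (gact ((b*c - a*d)/c) a 0 c) ?l0))" by (simp add: lim_comp)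
      finally show ?thesis using L3_img[OF good_T L3_img[OF good_S in3]] by simp
    qed
  qed
  have od: "\<forall>l \<in> (L3 :: 'a vec4 set set set).
            OD2 l = [1, 1, (card (UNIV :: 'a set) - 1) div 2, (card (UNIV :: 'a set) - 1) div 2, 0] \<and>
            OD0 l = [1, 1, (card (UNIV :: 'a set) - 1) div 2, (card (UNIV :: 'a set) - 1) div 2, 0]"
  proof
    fix l :: "'a vec4 set set" assume l: "l \<in> L3"
    obtain s where s: "l = Linf s \<or> (\<exists>t. l = lim (T t) (lim S (Linf s)))" using reduce[OF l] by blast
    have "OD2 l = OD2 (Linf s) \<and> OD0 l = OD0 (Linf s)"
      using s
    proof
      assume "l = Linf s" then show ?thesis by simp
    next
      assume "\<exists>t. l = lim (T t) (lim S (Linf s))"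
      then obtain t where t: "l = lim (T t) (lim S (Linf s))" by blast
      have "OD2 l = OD2 (lim S (Linf s))" unfolding t by (rule OD2_img[OF good_T])
      also have "\<dots> = OD2 (Linf s)" by (rule OD2_img[OF good_S])
      finally have 1: "OD2 l = OD2 (Linf s)" .
      have "OD0 l = OD0 (lim S (Linf s))" unfolding t by (rule OD0_img[OF good_T])
      also have "\<dots> = OD0 (Linf s)" by (rule OD0_img[OF good_S])
      finally show ?thesis using 1 by simp
    qed
    then show "OD2 l = [1, 1, (card (UNIV :: 'a set) - 1) div 2, (card (UNIV :: 'a set) - 1) div 2, 0] \<and>
            OD0 l = [1, 1, (card (UNIV :: 'a set) - 1) div 2, (card (UNIV :: 'a set) - 1) div 2, 0]"
      using OD2_Linf[OF two three] OD0_Linf[OF two three] by simp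
  qed
  show ?thesis using sub1 sub2 od by blast
qed

end
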